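(* Let $G$ be a graph with $n$ vertices, maximum degree $\Delta$ and minimum degree $\delta$, and let $\overline{G}$ be its complement. If $0\leq \alpha \leq 1$ and $1\leq k\leq n$, then $$(1-\alpha)n+(\alpha n-1)k \leq S_{k}(A_{\alpha}(G))+S_{k}(A_{\alpha}(\overline{G}))\leq k\left[(2-\alpha)n+\alpha(\Delta-\delta-1)-(1-\alpha)(k+1)\right].$$
   Context: All graphs are simple and undirected. $A_{\alpha}(G)=\alpha D(G)+(1-\alpha)A(G)$, where $A(G)$ is the adjacency matrix and $D(G)$ the diagonal degree matrix. For a real symmetric matrix $M$ with eigenvalues $\lambda_1(M)\geq\cdots\geq\lambda_n(M)$, $S_k(M)=\sum_{i=1}^k\lambda_i(M)$. *)

theory Defs
  imports "Jordan_Normal_Form.Char_Poly" "HOL-Computational_Algebra.Polynomial"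
begin

definition simple_graph :: "nat \<Rightarrow> (nat \<Rightarrow> nat \<Rightarrow> bool) \<Rightarrow> bool" where
  "simple_graph n E \<longleftrightarrow> (\<forall>i<n. \<forall>j<n. E i j \<longleftrightarrow> E j i) \<and> (\<forall>i<n. \<not> E i i)"

definition degree :: "nat \<Rightarrow> (nat \<Rightarrow> nat \<Rightarrow> bool) \<Rightarrow> nat \<Rightarrow> nat" where
  "degree n E i = card {j. j < n \<and> E i j}"

definition max_degree :: "nat \<Rightarrow> (nat \<Rightarrow> nat \<Rightarrow> bool) \<Rightarrow> nat" where
  "max_degree n E = Max (degree n E ` {0..<n})"

definition min_degree :: "nat \<Rightarrow> (nat \<Rightarrow> nat \<Rightarrow> bool) \<Rightarrow> nat" where
  "min_degree n E = Min (degree n E ` {0..<n})"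

definition complement :: "(nat \<Rightarrow> nat \<Rightarrow> bool) \<Rightarrow> nat \<Rightarrow> nat \<Rightarrow> bool" where
  "complement E i j \<longleftrightarrow> i \<noteq> j \<and> \<not> E i j"

definition adj_mat :: "nat \<Rightarrow> (nat \<Rightarrow> nat \<Rightarrow> bool) \<Rightarrow> real mat" where
  "adj_mat n E = mat n n (\<lambda>(i,j). if E i j then 1 else 0)"

definition deg_mat :: "nat \<Rightarrow> (nat \<Rightarrow> nat \<Rightarrow> bool) \<Rightarrow> real mat" where
  "deg_mat n E = mat n n (\<lambda>(i,j). if i = j then real (degree n E i) else 0)"

definition A_alpha :: "real \<Rightarrow> nat \<Rightarrow> (nat \<Rightarrow> nat \<Rightarrow> bool) \<Rightarrow> real mat" where
  "A_alpha \<alpha> n E = \<alpha> \<cdot>\<^sub>m deg_mat n E + (1 - \<alpha>) \<cdot>\<^sub>m adj_mat n E"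

text \<open>Eigenvalues (with multiplicity) of a real square matrix: the real roots of its
  characteristic polynomial; for a real symmetric matrix these are all n eigenvalues.\<close>
definition eigenvalues_desc :: "real mat \<Rightarrow> real list" where
  "eigenvalues_desc M = rev (sorted_list_of_multiset (proots (char_poly M)))"

definition S_k :: "nat \<Rightarrow> real mat \<Rightarrow> real" where
  "S_k k M = sum_list (take k (eigenvalues_desc M))"

end

theory Submission
  imports Defs "Jordan_Normal_Form.Schur_Decomposition"
begin

lemma conj_real_vec[simp]: "conjugate (v :: real vec) = v"
  by (rule eq_vecI) auto

lemma cscalar_real[simp]: "(v::real vec) \<bullet>c w = v \<bullet> w"
  by simp

lemma self_nonneg: "(v::real vec) \<bullet> v \<ge> 0"
  unfolding scalar_prod_def by (intro sum_nonneg) auto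

lemma self_pos: assumes "v \<in> carrier_vec n" "v \<noteq> 0\<^sub>v n" shows "(v::real vec) \<bullet> v > 0"
proof -
  obtain i where i: "i < n" "v $ i \<noteq> 0" using assms by (metis carrier_vecD eq_vecI index_zero_vec(1,2))
  have "0 < v $ i * v $ i" using i by (metis not_real_square_gt_zero)
  also have "\<dots> \<le> v \<bullet> v" unfolding scalar_prod_def
    using i assms by (intro member_le_sum) auto
  finally show ?thesis .
qed

definition nrm :: "real vec \<Rightarrow> real vec" where
  "nrm w = (1 / sqrt (w \<bullet> w)) \<cdot>\<^sub>v w"

lemma nrm_carrier[simp]: "w \<in> carrier_vec n \<Longrightarrow> nrm w \<in> carrier_vec n"
  unfolding nrm_def by simp

lemma nrm_prod: assumes "v \<in> carrier_vec n" "w \<in> carrier_vec n"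
  shows "nrm v \<bullet> nrm w = (v \<bullet> w) / (sqrt (v \<bullet> v) * sqrt (w \<bullet> w))"
  unfolding nrm_def using assms
  by (simp add: smult_scalar_prod_distrib scalar_prod_smult_distrib)

lemma nrm_unit: assumes "v \<in> carrier_vec n" "v \<noteq> 0\<^sub>v n"
  shows "nrm v \<bullet> nrm v = 1"
proof -
  have p: "v \<bullet> v > 0" using self_pos assms by blast
  show ?thesis unfolding nrm_prod[OF assms(1) assms(1)]
    using p by (simp add: real_sqrt_mult[symmetric])
qed

lemma nrm_of_unit: assumes "v \<bullet> v = 1" shows "nrm v = v"
  unfolding nrm_def assms by simp

lemma quad_sum: assumes "A \<in> carrier_mat n n" "x \<in> carrier_vec n" "y \<in> carrier_vec n"
  shows "x \<bullet> (A *\<^sub>v y) = (\<Sum>i<n. \<Sum>j<n. x$i * A$$(i,j) * y$j)"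
  using assms unfolding scalar_prod_def mult_mat_vec_def row_def
  by (auto simp: sum_distrib_left mult.assoc atLeast0LessThan intro!: sum.cong)

lemma sym_entry: assumes "A \<in> carrier_mat n n" "A\<^sup>T = A" "i < n" "j < n"
  shows "A $$ (i,j) = A $$ (j,i)"
  using assms by (metis carrier_matD index_transpose_mat(1))

lemma sym_form: assumes "A \<in> carrier_mat n n" "A\<^sup>T = A" "x \<in> carrier_vec n" "y \<in> carrier_vec n"
  shows "x \<bullet> (A *\<^sub>v y) = y \<bullet> ((A::real mat) *\<^sub>v x)"
proof -
  have "x \<bullet> (A *\<^sub>v y) = (\<Sum>i<n. \<Sum>j<n. x$i * A$$(i,j) * y$j)" by (rule quad_sum[OF assms(1,3,4)])
  also have "\<dots> = (\<Sum>j<n. \<Sum>i<n. x$i * A$$(i,j) * y$j)" by (rule sum.swap)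
  also have "\<dots> = (\<Sum>j<n. \<Sum>i<n. y$j * A$$(j,i) * x$i)"
    using sym_entry[OF assms(1,2)] by (intro sum.cong refl) (auto simp: mult.commute mult.left_commute)
  also have "\<dots> = y \<bullet> (A *\<^sub>v x)" by (rule quad_sum[OF assms(1,4,3), symmetric])
  finally show ?thesis .
qed

definition diag_l :: "real list \<Rightarrow> real mat" where
  "diag_l es = mat (length es) (length es) (\<lambda>(i,j). if i = j then es ! i else 0)"

lemma diag_l_carrier[simp]: "diag_l es \<in> carrier_mat (length es) (length es)"
  unfolding diag_l_def by simp

lemma diag_l_index[simp]: "i < length es \<Longrightarrow> j < length es \<Longrightarrow> diag_l es $$ (i,j) = (if i = j then es ! i else 0)"
  unfolding diag_l_def by simp

lemma diag_l_dim[simp]: "dim_row (diag_l es) = length es" "dim_col (diag_l es) = length es"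
  unfolding diag_l_def by simp_all

lemma length_char_poly_prod:
  assumes A: "A \<in> carrier_mat n n" and c: "char_poly A = (\<Prod>(e::real)\<leftarrow>es. [:-e,1:])"
  shows "length es = n"
proof -
  have "Polynomial.degree (\<Prod>(e::real)\<leftarrow>es. [:-e,1:]) = length es"
  proof (induct es)
    case (Cons a es)
    have mon: "monic (\<Prod>(e::real)\<leftarrow>es. [:-e,1:])" by (rule monic_prod_list, auto)
    hence nz: "(\<Prod>(e::real)\<leftarrow>es. [:-e,1:]) \<noteq> 0" by auto
    have "Polynomial.degree (\<Prod>(e::real)\<leftarrow>a#es. [:-e,1:]) = Polynomial.degree [:-a,1:] + Polynomial.degree (\<Prod>(e::real)\<leftarrow>es. [:-e,1:])"
      unfolding list.map prod_list.Cons by (rule degree_mult_eq) (use nz in auto)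
    thus ?case using Cons by simp
  qed simp
  with degree_monic_char_poly[OF A] c show ?thesis by simp
qed

lemma blk_mult:
  assumes "A1 \<in> carrier_mat a a" "A2 \<in> carrier_mat a a" "D1 \<in> carrier_mat b b" "D2 \<in> carrier_mat b b"
  shows "four_block_mat A1 (0\<^sub>m a b) (0\<^sub>m b a) D1 * four_block_mat A2 (0\<^sub>m a b) (0\<^sub>m b a) D2
       = four_block_mat (A1 * A2) (0\<^sub>m a b) (0\<^sub>m b a) (D1 * (D2::'x::comm_ring_1 mat))"
  by (subst mult_four_block_mat[of _ a a _ b _ b _ _ a _ b]) (use assms in auto)

lemma blk_transpose:
  assumes "A1 \<in> carrier_mat a a" "D1 \<in> carrier_mat b b"
  shows "(four_block_mat A1 (0\<^sub>m a b) (0\<^sub>m b a) D1)\<^sup>T = four_block_mat A1\<^sup>T (0\<^sub>m a b) (0\<^sub>m b a) D1\<^sup>T"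
  by (subst transpose_four_block_mat[of _ a a _ b _ b]) (use assms in auto)

lemma assoc3: assumes "A \<in> carrier_mat n n" "B \<in> carrier_mat n n" "C \<in> carrier_mat n n"
  shows "A * B * C = A * (B * C)" using assms by (rule assoc_mult_mat)

lemma spectral_es:
  fixes A :: "real mat"
  assumes "A \<in> carrier_mat n n" "A\<^sup>T = A" "char_poly A = (\<Prod>e\<leftarrow>es. [:-e,1:])"
  shows "\<exists>U. U \<in> carrier_mat n n \<and> U\<^sup>T * U = 1\<^sub>m n \<and> U * U\<^sup>T = 1\<^sub>m n \<and> U\<^sup>T * A * U = diag_l es"
  using assms
proof (induct es arbitrary: n A)
  case Nil
  have n: "n = 0" using length_char_poly_prod[OF Nil(1) Nil(3)] by simp
  have A0: "A \<in> carrier_mat 0 0" using Nil(1) n by simp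
  show ?case apply (rule exI[of _ "1\<^sub>m 0"]) using A0 n by (auto intro!: eq_matI)
next
  case (Cons e es n A)
  note A = Cons.prems(1) and sym = Cons.prems(2) and cp = Cons.prems(3)
  have len: "length (e#es) = n" by (rule length_char_poly_prod[OF A cp])
  define m where "m = n - 1"
  have nm: "n = Suc m" using len m_def by auto
  have lenes: "length es = m" using len nm by simp
  have ev: "eigenvalue A e" unfolding eigenvalue_root_char_poly[OF A] cp by simp
  define v0 where "v0 = find_eigenvector A e"
  from find_eigenvector[OF A ev] have "eigenvector A v0 e" unfolding v0_def .
  hence v0: "v0 \<in> carrier_vec n" "v0 \<noteq> 0\<^sub>v n" "A *\<^sub>v v0 = e \<cdot>\<^sub>v v0"
    unfolding eigenvector_def using A by auto
  define v where "v = nrm v0"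
  have v: "v \<in> carrier_vec n" "v \<bullet> v = 1" unfolding v_def using v0 nrm_unit by auto
  have vnz: "v \<noteq> 0\<^sub>v n" using v by auto
  have Av: "A *\<^sub>v v = e \<cdot>\<^sub>v v"
  proof -
    have "A *\<^sub>v v = (1 / sqrt (v0 \<bullet> v0)) \<cdot>\<^sub>v (A *\<^sub>v v0)"
      unfolding v_def nrm_def using A v0 by (simp add: mult_mat_vec)
    also have "\<dots> = e \<cdot>\<^sub>v v" unfolding v0(3) v_def nrm_def
      by (rule eq_vecI) auto
    finally show ?thesis .
  qed
  interpret cof_vec_space n "TYPE(real)" .
  define b where "b = basis_completion v"
  from basis_completion[OF v(1) vnz, folded b_def]
  have dist_b: "distinct b" and indep: "\<not> lin_dep (set b)" and bc: "set b \<subseteq> carrier_vec n"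
    and hdb: "hd b = v" and len_b: "length b = n" by auto
  from hdb len_b nm obtain vs where bv: "b = v # vs" by (cases b, auto)
  define ws where "ws = gram_schmidt n b"
  from gram_schmidt_result[OF bc dist_b indep refl, folded ws_def]
  have ws: "set ws \<subseteq> carrier_vec n" "corthogonal ws" "length ws = n"
    by (auto simp: len_b)
  from gram_schmidt_hd[OF v(1), of vs, folded bv] have hdws: "hd ws = v" unfolding ws_def .
  define ws' where "ws' = map nrm ws"
  have wsi: "\<And>i. i < n \<Longrightarrow> ws ! i \<in> carrier_vec n" using ws by auto
  have ws'c: "\<And>i. i < n \<Longrightarrow> ws' ! i \<in> carrier_vec n" using ws wsi unfolding ws'_def by auto
  have ws'_orth: "\<And>i j. i < n \<Longrightarrow> j < n \<Longrightarrow> ws' ! i \<bullet> ws' ! j = (if i = j then 1 else 0)"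
  proof -
    fix i j assume i: "i < n" and j: "j < n"
    have c: "ws ! i \<bullet> ws ! j = 0 \<longleftrightarrow> i \<noteq> j" using corthogonalD[OF ws(2)] i j ws(3) by auto
    show "ws' ! i \<bullet> ws' ! j = (if i = j then 1 else 0)"
    proof (cases "i = j")
      case True
      have "ws ! i \<noteq> 0\<^sub>v n" using c True wsi[OF i] by auto
      thus ?thesis using True nrm_unit[OF wsi[OF i]] i ws(3) unfolding ws'_def by auto
    next
      case False
      thus ?thesis using c nrm_prod[OF wsi[OF i] wsi[OF j]] i j ws(3) unfolding ws'_def by auto
    qed
  qed
  have ws'0: "ws' ! 0 = v"
    using hdws ws(3) nm nrm_of_unit[OF v(2)] unfolding ws'_def by (cases ws) auto
  define W where "W = mat_of_cols n ws'"
  have W: "W \<in> carrier_mat n n" unfolding W_def ws'_def using ws by auto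
  have colW: "\<And>i. i < n \<Longrightarrow> col W i = ws' ! i"
    unfolding W_def using ws'c ws(3) by (subst col_mat_of_cols) (auto simp: ws'_def)
  have WtW: "W\<^sup>T * W = 1\<^sub>m n"
  proof (rule eq_matI)
    fix i j assume "i < dim_row (1\<^sub>m n)" "j < dim_col (1\<^sub>m n)"
    hence i: "i < n" and j: "j < n" by auto
    show "(W\<^sup>T * W) $$ (i, j) = 1\<^sub>m n $$ (i, j)"
      using i j W by (simp add: index_mult_mat row_transpose colW ws'_orth)
  qed (use W in auto)
  have Wt: "W\<^sup>T \<in> carrier_mat n n" using W by auto
  have WWt: "W * W\<^sup>T = 1\<^sub>m n" by (rule mat_mult_left_right_inverse[OF Wt W WtW])
  define A' where "A' = W\<^sup>T * A * W"
  have A': "A' \<in> carrier_mat n n" unfolding A'_def using W A by auto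
  have A'_ent: "\<And>i j. i < n \<Longrightarrow> j < n \<Longrightarrow> A' $$ (i,j) = col W i \<bullet> (A *\<^sub>v col W j)"
  proof -
    fix i j assume i: "i < n" and j: "j < n"
    have "A' = W\<^sup>T * (A * W)" unfolding A'_def by (rule assoc3[OF Wt A W])
    hence "A' $$ (i,j) = row W\<^sup>T i \<bullet> col (A * W) j" using i j W A by (simp add: index_mult_mat)
    also have "\<dots> = col W i \<bullet> (A *\<^sub>v col W j)" using i j W A by (simp add: row_transpose col_mult2 mult_mat_vec_def)
    finally show "A' $$ (i,j) = col W i \<bullet> (A *\<^sub>v col W j)" .
  qed
  have A'sym: "A'\<^sup>T = A'"
  proof (rule eq_matI)
    fix i j assume "i < dim_row A'" "j < dim_col A'"
    hence i: "i < n" and j: "j < n" using A' by auto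
    have cWi: "col W i \<in> carrier_vec n" "col W j \<in> carrier_vec n" using W i j by auto
    have "A'\<^sup>T $$ (i, j) = A' $$ (j, i)" using i j A' by simp
    also have "\<dots> = col W j \<bullet> (A *\<^sub>v col W i)" by (rule A'_ent[OF j i])
    also have "\<dots> = col W i \<bullet> (A *\<^sub>v col W j)" by (rule sym_form[OF A sym cWi(2) cWi(1)])
    also have "\<dots> = A' $$ (i, j)" by (rule A'_ent[OF i j, symmetric])
    finally show "A'\<^sup>T $$ (i, j) = A' $$ (i, j)" .
  qed (use A' in auto)
  have A'col0: "\<And>i. i < n \<Longrightarrow> A' $$ (i,0) = (if i = 0 then e else 0)"
  proof -
    fix i assume i: "i < n"
    have "A' $$ (i,0) = ws' ! i \<bullet> (e \<cdot>\<^sub>v ws' ! 0)"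
      using A'_ent[OF i] colW[OF i] colW[of 0] nm Av ws'0 by auto
    also have "\<dots> = e * (ws' ! i \<bullet> ws' ! 0)" using ws'c[OF i] ws'c[of 0] nm by simp
    finally show "A' $$ (i,0) = (if i = 0 then e else 0)" using ws'_orth[OF i, of 0] nm by auto
  qed
  have A'row0: "\<And>j. j < n \<Longrightarrow> A' $$ (0,j) = (if j = 0 then e else 0)"
    using A'col0 sym_entry[OF A' A'sym] nm by (metis zero_less_Suc)
  define A3 where "A3 = mat m m (\<lambda>(i,j). A' $$ (Suc i, Suc j))"
  define A1 where "A1 = mat 1 1 (\<lambda>_. e)"
  have A3: "A3 \<in> carrier_mat m m" unfolding A3_def by auto
  have A1: "A1 \<in> carrier_mat 1 1" unfolding A1_def by auto
  have A3sym: "A3\<^sup>T = A3"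
    by (rule eq_matI) (use sym_entry[OF A' A'sym] nm in \<open>auto simp: A3_def\<close>)
  have A'blk: "A' = four_block_mat A1 (0\<^sub>m 1 m) (0\<^sub>m m 1) A3"
  proof (rule eq_matI)
    fix i j assume "i < dim_row (four_block_mat A1 (0\<^sub>m 1 m) (0\<^sub>m m 1) A3)"
       "j < dim_col (four_block_mat A1 (0\<^sub>m 1 m) (0\<^sub>m m 1) A3)"
    hence i: "i < Suc m" and j: "j < Suc m" using A1 A3 by auto
    show "A' $$ (i, j) = four_block_mat A1 (0\<^sub>m 1 m) (0\<^sub>m m 1) A3 $$ (i, j)"
      using i j A1 A3 A'col0 A'row0 nm
      by (cases i; cases j) (auto simp: A1_def A3_def)
  qed (use A' A1 A3 nm in auto)
  have simAA': "similar_mat A A'"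
  proof -
    have "W * A' * W\<^sup>T = (W * W\<^sup>T) * A * (W * W\<^sup>T)"
    proof -
      have "W * A' * W\<^sup>T = W * (W\<^sup>T * A * W) * W\<^sup>T" unfolding A'_def ..
      also have "\<dots> = W * (W\<^sup>T * (A * W)) * W\<^sup>T" using assoc3[OF Wt A W] by simp
      also have "\<dots> = (W * W\<^sup>T) * (A * W) * W\<^sup>T"
        using assoc_mult_mat[OF W Wt, of "A * W" n] A W by simp
      also have "\<dots> = (W * W\<^sup>T) * (A * W * W\<^sup>T)"
        using assoc_mult_mat[of "W * W\<^sup>T" n n "A * W" n "W\<^sup>T" n] A W by simp
      also have "\<dots> = (W * W\<^sup>T) * (A * (W * W\<^sup>T))" using assoc3[OF A W Wt] by simp
      also have "\<dots> = (W * W\<^sup>T) * A * (W * W\<^sup>T)"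
        using assoc_mult_mat[of "W * W\<^sup>T" n n A n "W * W\<^sup>T" n] A W by simp
      finally show ?thesis .
    qed
    also have "\<dots> = A" unfolding WWt using A by simp
    finally have eq: "A = W * A' * W\<^sup>T" by simp
    have "similar_mat_wit A A' W W\<^sup>T"
      unfolding similar_mat_wit_def Let_def using A A' W Wt WWt WtW eq by auto
    thus ?thesis unfolding similar_mat_def by blast
  qed
  have "char_poly A = char_poly A'" by (rule char_poly_similar[OF simAA'])
  also have "\<dots> = char_poly A1 * char_poly A3"
    unfolding A'blk by (rule char_poly_four_block_zeros_col[OF A1 _ A3]) auto
  also have "char_poly A1 = [: -e,1 :]"
    by (simp add: A1_def char_poly_defs det_def sign_def)
  finally have "[: -e,1 :] * char_poly A3 = [: -e,1 :] * (\<Prod>e\<leftarrow>es. [:-e,1:])" using cp by simp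
  hence cp3: "char_poly A3 = (\<Prod>e\<leftarrow>es. [:-e,1:])"
    by (metis mult_cancel_left pCons_eq_0_iff zero_neq_one)
  from Cons(1)[OF A3 A3sym cp3] obtain U3 where U3: "U3 \<in> carrier_mat m m" and
    U3o: "U3\<^sup>T * U3 = 1\<^sub>m m" and U3o': "U3 * U3\<^sup>T = 1\<^sub>m m" and U3d: "U3\<^sup>T * A3 * U3 = diag_l es"
    by blast
  define B where "B = four_block_mat (1\<^sub>m 1) (0\<^sub>m 1 m) (0\<^sub>m m 1) U3"
  have B: "B \<in> carrier_mat n n" unfolding B_def using U3 nm by auto
  have Bt: "B\<^sup>T = four_block_mat (1\<^sub>m 1) (0\<^sub>m 1 m) (0\<^sub>m m 1) U3\<^sup>T"
    unfolding B_def by (subst blk_transpose) (use U3 in auto)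
  have Btc: "B\<^sup>T \<in> carrier_mat n n" using B by auto
  have BtB: "B\<^sup>T * B = 1\<^sub>m n"
  proof -
    have "B\<^sup>T * B = four_block_mat (1\<^sub>m 1) (0\<^sub>m 1 m) (0\<^sub>m m 1) U3\<^sup>T * four_block_mat (1\<^sub>m 1) (0\<^sub>m 1 m) (0\<^sub>m m 1) U3"
      by (subst Bt) (simp add: B_def)
    also have "\<dots> = four_block_mat (1\<^sub>m 1 * 1\<^sub>m 1) (0\<^sub>m 1 m) (0\<^sub>m m 1) (U3\<^sup>T * U3)"
      by (rule blk_mult) (use U3 in auto)
    also have "\<dots> = 1\<^sub>m n" using U3o nm four_block_one_mat[of 1 m] by simp
    finally show ?thesis .
  qed
  define U where "U = W * B"
  have U: "U \<in> carrier_mat n n" unfolding U_def using W B by auto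
  have Ut: "U\<^sup>T = B\<^sup>T * W\<^sup>T" unfolding U_def by (rule transpose_mult[OF W B])
  have Utc: "U\<^sup>T \<in> carrier_mat n n" using U by auto
  have UtU: "U\<^sup>T * U = 1\<^sub>m n"
  proof -
    have "U\<^sup>T * U = B\<^sup>T * W\<^sup>T * (W * B)" by (simp only: Ut, simp only: U_def)
    also have "\<dots> = B\<^sup>T * (W\<^sup>T * (W * B))" using assoc_mult_mat[OF Btc Wt, of "W * B" n] W B by simp
    also have "W\<^sup>T * (W * B) = W\<^sup>T * W * B" using assoc3[OF Wt W B] by simp
    also have "\<dots> = B" unfolding WtW using B by simp
    finally show ?thesis using BtB by simp
  qed
  have UUt: "U * U\<^sup>T = 1\<^sub>m n" by (rule mat_mult_left_right_inverse[OF Utc U UtU])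
  have "U\<^sup>T * A * U = B\<^sup>T * A' * B"
  proof -
    have "U\<^sup>T * A * U = B\<^sup>T * W\<^sup>T * A * (W * B)" by (simp only: Ut, simp only: U_def)
    also have "\<dots> = B\<^sup>T * (W\<^sup>T * A) * (W * B)" using assoc3[OF Btc Wt A] by simp
    also have "\<dots> = B\<^sup>T * ((W\<^sup>T * A) * (W * B))"
      using assoc_mult_mat[of "B\<^sup>T" n n "W\<^sup>T * A" n "W * B" n] W B A by simp
    also have "(W\<^sup>T * A) * (W * B) = (W\<^sup>T * A * W) * B"
      using assoc_mult_mat[of "W\<^sup>T * A" n n W n B n] W B A by simp
    also have "B\<^sup>T * ((W\<^sup>T * A * W) * B) = B\<^sup>T * (W\<^sup>T * A * W) * B"
      using assoc_mult_mat[of "B\<^sup>T" n n "W\<^sup>T * A * W" n B n] W B A by simp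
    finally show ?thesis unfolding A'_def .
  qed
  also have "\<dots> = four_block_mat (1\<^sub>m 1 * A1 * 1\<^sub>m 1) (0\<^sub>m 1 m) (0\<^sub>m m 1) (U3\<^sup>T * A3 * U3)"
  proof -
    have "B\<^sup>T * A' * B = four_block_mat (1\<^sub>m 1) (0\<^sub>m 1 m) (0\<^sub>m m 1) U3\<^sup>T * four_block_mat A1 (0\<^sub>m 1 m) (0\<^sub>m m 1) A3 * four_block_mat (1\<^sub>m 1) (0\<^sub>m 1 m) (0\<^sub>m m 1) U3"
      by (subst Bt, subst A'blk) (simp add: B_def)
    also have "\<dots> = four_block_mat (1\<^sub>m 1 * A1) (0\<^sub>m 1 m) (0\<^sub>m m 1) (U3\<^sup>T * A3) * four_block_mat (1\<^sub>m 1) (0\<^sub>m 1 m) (0\<^sub>m m 1) U3"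
      by (subst blk_mult) (use U3 A1 A3 in auto)
    also have "\<dots> = four_block_mat (1\<^sub>m 1 * A1 * 1\<^sub>m 1) (0\<^sub>m 1 m) (0\<^sub>m m 1) (U3\<^sup>T * A3 * U3)"
      by (rule blk_mult) (use U3 A1 A3 in auto)
    finally show ?thesis .
  qed
  also have "\<dots> = diag_l (e # es)"
  proof (rule eq_matI)
    fix i j assume "i < dim_row (diag_l (e # es))" "j < dim_col (diag_l (e # es))"
    hence i: "i < Suc m" and j: "j < Suc m" using lenes by auto
    show "four_block_mat (1\<^sub>m 1 * A1 * 1\<^sub>m 1) (0\<^sub>m 1 m) (0\<^sub>m m 1) (U3\<^sup>T * A3 * U3) $$ (i, j) =
          diag_l (e # es) $$ (i, j)"
      unfolding U3d using i j A1 A3 lenes by (cases i; cases j) (auto simp: A1_def)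
  qed (use A1 A3 U3 lenes U3d in auto)
  finally show ?case using U UtU UUt by blast
qed

interpretation rp: map_poly_inj_idom_hom "complex_of_real" ..

lemma map_poly_prod_lin: "map_poly complex_of_real (\<Prod>r\<leftarrow>rs. [:-r,1:]) = (\<Prod>r\<leftarrow>rs. [:-complex_of_real r,1:])"
  by (simp add: rp.hom_prod_list o_def)

lemma sym_eigen_real:
  fixes A :: "real mat"
  assumes A: "A \<in> carrier_mat n n" and sym: "A\<^sup>T = A"
    and ev: "eigenvalue (map_mat complex_of_real A) a"
  shows "cnj a = a"
proof -
  let ?Ac = "map_mat complex_of_real A"
  obtain v where "eigenvector ?Ac v a" using ev unfolding eigenvalue_def by blast
  hence v: "v \<in> carrier_vec n" "v \<noteq> 0\<^sub>v n" "?Ac *\<^sub>v v = a \<cdot>\<^sub>v v"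
    unfolding eigenvector_def using A by auto
  have Aij: "\<And>i j. i < n \<Longrightarrow> j < n \<Longrightarrow> ?Ac $$ (i,j) = complex_of_real (A $$ (i,j))"
    using A by auto
  have Aji: "\<And>i j. i < n \<Longrightarrow> j < n \<Longrightarrow> A $$ (i,j) = A $$ (j,i)"
    using A sym by (metis carrier_matD index_transpose_mat(1))
  have row: "\<And>i. i < n \<Longrightarrow> (\<Sum>j<n. ?Ac $$ (i,j) * v $ j) = a * v $ i"
  proof -
    fix i assume i: "i < n"
    have "(?Ac *\<^sub>v v) $ i = (\<Sum>j<n. ?Ac $$ (i,j) * v $ j)"
      using i A v(1) by (auto simp: scalar_prod_def atLeast0LessThan intro!: sum.cong)
    thus "(\<Sum>j<n. ?Ac $$ (i,j) * v $ j) = a * v $ i" using v(3) i v(1) by simp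
  qed
  define s where "s = (\<Sum>i<n. \<Sum>j<n. cnj (v $ i) * ?Ac $$ (i,j) * v $ j)"
  define N where "N = (\<Sum>i<n. cnj (v $ i) * v $ i)"
  have sN: "s = a * N"
  proof -
    have "s = (\<Sum>i<n. cnj (v $ i) * (\<Sum>j<n. ?Ac $$ (i,j) * v $ j))"
      unfolding s_def by (simp add: sum_distrib_left mult.assoc)
    also have "\<dots> = (\<Sum>i<n. cnj (v $ i) * (a * v $ i))" using row by simp
    also have "\<dots> = a * N" unfolding N_def by (simp add: sum_distrib_left mult_ac)
    finally show ?thesis .
  qed
  have cs: "cnj s = s"
  proof -
    have "cnj s = (\<Sum>i<n. \<Sum>j<n. v $ i * ?Ac $$ (i,j) * cnj (v $ j))"
      unfolding s_def cnj_sum using Aij by (simp add: mult_ac)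
    also have "\<dots> = (\<Sum>j<n. \<Sum>i<n. v $ i * ?Ac $$ (i,j) * cnj (v $ j))" by (rule sum.swap)
    also have "\<dots> = s" unfolding s_def
      by (intro sum.cong refl) (use Aij Aji in \<open>auto simp: mult_ac\<close>)
    finally show ?thesis .
  qed
  have cN: "cnj N = N" unfolding N_def cnj_sum by (simp add: mult_ac)
  have N0: "N \<noteq> 0"
  proof -
    obtain i where i: "i < n" "v $ i \<noteq> 0" using v(1,2) by (metis carrier_vecD eq_vecI index_zero_vec(1,2))
    have "N = complex_of_real (\<Sum>i<n. (cmod (v $ i))\<^sup>2)"
      unfolding N_def of_real_sum by (intro sum.cong refl) (metis complex_norm_square mult.commute)
    moreover have "(\<Sum>i<n. (cmod (v $ i))\<^sup>2) > 0"
    proof -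
      have "0 < (cmod (v $ i))\<^sup>2" using i by simp
      also have "\<dots> \<le> (\<Sum>i<n. (cmod (v $ i))\<^sup>2)" using i by (intro member_le_sum) auto
      finally show ?thesis .
    qed
    ultimately show ?thesis by (metis less_irrefl of_real_eq_0_iff)
  qed
  have "cnj a * N = a * N"
  proof -
    have "cnj a * N = cnj (a * N)" using cN by simp
    also have "\<dots> = a * N" using cs sN by simp
    finally show ?thesis .
  qed
  thus ?thesis using N0 by simp
qed
lemma sym_split:
  fixes A :: "real mat"
  assumes A: "A \<in> carrier_mat n n" and sym: "A\<^sup>T = A"
  shows "\<exists>es. char_poly A = (\<Prod>e\<leftarrow>es. [:-e,1:])"
proof -
  let ?Ac = "map_mat complex_of_real A"
  have Ac: "?Ac \<in> carrier_mat n n" using A by auto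
  obtain as where as: "char_poly ?Ac = (\<Prod>a\<leftarrow>as. [:-a,1:])"
    using char_poly_factorized[OF Ac] by auto
  have real: "\<And>a. a \<in> set as \<Longrightarrow> complex_of_real (Re a) = a"
  proof -
    fix a assume a: "a \<in> set as"
    have "eigenvalue ?Ac a" unfolding eigenvalue_root_char_poly[OF Ac] as
      by (rule linear_poly_root[OF a])
    hence "cnj a = a" by (rule sym_eigen_real[OF A sym])
    thus "complex_of_real (Re a) = a" by (simp add: complex_eq_iff)
  qed
  have "map_poly complex_of_real (char_poly A) = char_poly ?Ac"
    by (rule of_real_hom.char_poly_hom[OF A, symmetric])
  also have "\<dots> = (\<Prod>a\<leftarrow>as. [:-complex_of_real (Re a),1:])"
    unfolding as using real by (metis (no_types, lifting) map_eq_conv)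
  also have "\<dots> = map_poly complex_of_real (\<Prod>r\<leftarrow>map Re as. [:-r,1:])"
    unfolding map_poly_prod_lin by (simp add: o_def)
  finally show ?thesis unfolding rp.eq_iff by blast
qed

lemma proots_prod_lin: "proots (\<Prod>(e::real)\<leftarrow>es. [:-e,1:]) = mset es"
proof (induct es)
  case (Cons a es)
  have mon: "monic (\<Prod>(e::real)\<leftarrow>es. [:-e,1:])" by (rule monic_prod_list, auto)
  hence nz: "(\<Prod>(e::real)\<leftarrow>es. [:-e,1:]) \<noteq> 0" by auto
  have "proots (\<Prod>(e::real)\<leftarrow>a#es. [:-e,1:]) = proots [:-a,1:] + proots (\<Prod>(e::real)\<leftarrow>es. [:-e,1:])"
    unfolding list.map prod_list.Cons by (rule proots_mult) (use nz in auto)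
  thus ?case using Cons proots_linear_factor[of "-a"] by simp
qed simp

lemma prod_lin_perm: "mset xs = mset ys \<Longrightarrow> (\<Prod>(e::real)\<leftarrow>xs. [:-e,1:]) = (\<Prod>e\<leftarrow>ys. [:-e,1:])"
  by (metis mset_map prod_mset_prod_list)

lemma spectral:
  fixes A :: "real mat"
  assumes A: "A \<in> carrier_mat n n" and sym: "A\<^sup>T = A"
  shows "length (eigenvalues_desc A) = n"
    "\<And>i j. i \<le> j \<Longrightarrow> j < n \<Longrightarrow> eigenvalues_desc A ! j \<le> eigenvalues_desc A ! i"
    "\<exists>U. U \<in> carrier_mat n n \<and> U\<^sup>T * U = 1\<^sub>m n \<and> U * U\<^sup>T = 1\<^sub>m n \<and> U\<^sup>T * A * U = diag_l (eigenvalues_desc A)"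
proof -
  obtain es where es: "char_poly A = (\<Prod>e\<leftarrow>es. [:-e,1:])" using sym_split[OF A sym] by blast
  have ev: "eigenvalues_desc A = rev (sort es)"
    unfolding eigenvalues_desc_def es proots_prod_lin by simp
  have cp: "char_poly A = (\<Prod>e\<leftarrow>eigenvalues_desc A. [:-e,1:])"
    unfolding es ev by (rule prod_lin_perm) simp
  show len: "length (eigenvalues_desc A) = n" by (rule length_char_poly_prod[OF A cp])
  show "\<exists>U. U \<in> carrier_mat n n \<and> U\<^sup>T * U = 1\<^sub>m n \<and> U * U\<^sup>T = 1\<^sub>m n \<and> U\<^sup>T * A * U = diag_l (eigenvalues_desc A)"
    by (rule spectral_es[OF A sym cp])
  fix i j assume ij: "i \<le> j" "j < n"
  have ln: "length (sort es) = n" using len ev by simp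
  have "eigenvalues_desc A ! j = sort es ! (n - Suc j)" unfolding ev using ij ln by (simp add: rev_nth)
  also have "\<dots> \<le> sort es ! (n - Suc i)" using ij ln by (intro sorted_nth_mono) auto
  also have "\<dots> = eigenvalues_desc A ! i" unfolding ev using ij ln by (simp add: rev_nth)
  finally show "eigenvalues_desc A ! j \<le> eigenvalues_desc A ! i" .
qed

definition orthonormal :: "nat \<Rightarrow> nat \<Rightarrow> (nat \<Rightarrow> real vec) \<Rightarrow> bool" where
  "orthonormal n k u \<longleftrightarrow> (\<forall>j<k. u j \<in> carrier_vec n) \<and>
     (\<forall>i<k. \<forall>j<k. u i \<bullet> u j = (if i = j then 1 else 0))"

lemma sp_sum: "x \<in> carrier_vec n \<Longrightarrow> y \<bullet> x = (\<Sum>t<n. y $ t * x $ t)"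
  unfolding scalar_prod_def by (simp add: atLeast0LessThan)

lemma square_sum: "(\<Sum>j\<in>J. f j)\<^sup>2 = (\<Sum>j\<in>J. \<Sum>l\<in>J. f j * (f l :: real))"
  by (simp add: power2_eq_square sum_product)

lemma bessel:
  assumes u: "orthonormal n k y" and x: "x \<in> carrier_vec n"
  shows "(\<Sum>j<k. (y j \<bullet> x)\<^sup>2) \<le> x \<bullet> x"
proof -
  define c where "c j = y j \<bullet> x" for j
  have yc: "\<And>j. j < k \<Longrightarrow> y j \<in> carrier_vec n" using u unfolding orthonormal_def by auto
  have yo: "\<And>i j. i < k \<Longrightarrow> j < k \<Longrightarrow> (\<Sum>t<n. y i $ t * y j $ t) = (if i = j then 1 else 0)"
    using u yc sp_sum unfolding orthonormal_def by metis
  have cs: "\<And>j. j < k \<Longrightarrow> c j = (\<Sum>t<n. y j $ t * x $ t)" unfolding c_def using sp_sum[OF x] by auto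
  have "0 \<le> (\<Sum>t<n. (x $ t - (\<Sum>j<k. c j * y j $ t))\<^sup>2)" by (intro sum_nonneg) auto
  also have "\<dots> = (\<Sum>t<n. (x $ t)\<^sup>2) - 2 * (\<Sum>t<n. x $ t * (\<Sum>j<k. c j * y j $ t))
      + (\<Sum>t<n. (\<Sum>j<k. c j * y j $ t)\<^sup>2)"
    by (simp add: power2_diff sum.distrib sum_subtractf sum_distrib_left mult.assoc)
  also have "(\<Sum>t<n. x $ t * (\<Sum>j<k. c j * y j $ t)) = (\<Sum>j<k. c j * c j)"
  proof -
    have "(\<Sum>t<n. x $ t * (\<Sum>j<k. c j * y j $ t)) = (\<Sum>j<k. c j * (\<Sum>t<n. y j $ t * x $ t))"
      by (simp add: sum_distrib_left sum.swap[of _ "{..<n}"] mult_ac)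
    also have "\<dots> = (\<Sum>j<k. c j * c j)" using cs by simp
    finally show ?thesis .
  qed
  also have "(\<Sum>t<n. (\<Sum>j<k. c j * y j $ t)\<^sup>2) = (\<Sum>j<k. c j * c j)"
  proof -
    have "(\<Sum>t<n. (\<Sum>j<k. c j * y j $ t)\<^sup>2) = (\<Sum>t<n. \<Sum>j<k. \<Sum>l<k. c j * c l * (y j $ t * y l $ t))"
      unfolding square_sum by (simp add: mult_ac)
    also have "\<dots> = (\<Sum>j<k. \<Sum>l<k. c j * c l * (\<Sum>t<n. y j $ t * y l $ t))"
      by (simp add: sum_distrib_left sum.swap[of _ "{..<n}"])
    also have "\<dots> = (\<Sum>j<k. \<Sum>l<k. c j * c l * (if j = l then 1 else 0))"
      by (intro sum.cong refl) (simp add: yo)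
    also have "\<dots> = (\<Sum>j<k. c j * c j)" by (simp add: if_distrib sum.delta cong: if_cong)
    finally show ?thesis .
  qed
  finally have "(\<Sum>j<k. c j * c j) \<le> (\<Sum>t<n. (x $ t)\<^sup>2)" by simp
  moreover have "x \<bullet> x = (\<Sum>t<n. (x $ t)\<^sup>2)" using sp_sum[OF x] by (simp add: power2_eq_square)
  ultimately show ?thesis unfolding c_def by (simp add: power2_eq_square)
qed

lemma rearr:
  fixes l w :: "nat \<Rightarrow> real"
  assumes mono: "\<And>i j. i \<le> j \<Longrightarrow> j < n \<Longrightarrow> l j \<le> l i"
    and w: "\<And>i. i < n \<Longrightarrow> 0 \<le> w i \<and> w i \<le> 1"
    and sw: "(\<Sum>i<n. w i) = real k" and k: "1 \<le> k" "k \<le> n"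
  shows "(\<Sum>i<n. l i * w i) \<le> (\<Sum>i<k. l i)"
proof -
  define t where "t = l (k - 1)"
  have "(\<Sum>i<n. l i * w i) = (\<Sum>i<n. (l i - t) * w i) + t * real k"
    using sw by (simp add: algebra_simps sum.distrib sum_distrib_left[symmetric] sum_subtractf)
  also have "(\<Sum>i<n. (l i - t) * w i) \<le> (\<Sum>i<n. if i < k then l i - t else 0)"
  proof (rule sum_mono)
    fix i assume "i \<in> {..<n}"
    hence i: "i < n" by auto
    show "(l i - t) * w i \<le> (if i < k then l i - t else 0)"
    proof (cases "i < k")
      case True
      have "t \<le> l i" unfolding t_def using True k i by (intro mono) auto
      thus ?thesis using True w[OF i] by (simp add: mult_left_le)
    next
      case False
      have "l i \<le> t" unfolding t_def using False k i by (intro mono) auto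
      thus ?thesis using False w[OF i] by (simp add: mult_nonpos_nonneg)
    qed
  qed
  also have "(\<Sum>i<n. if i < k then l i - t else 0) = (\<Sum>i<k. l i - t)"
  proof -
    have "(\<Sum>i<n. if i < k then l i - t else 0) = (\<Sum>i\<in>{..<n} \<inter> {i. i < k}. l i - t)"
      by (simp add: sum.inter_restrict)
    also have "{..<n} \<inter> {i. i < k} = {..<k}" using k by auto
    finally show ?thesis .
  qed
  finally show ?thesis by (simp add: sum_subtractf)
qed

lemma tr_form:
  assumes M: "M \<in> carrier_mat r c" and x: "x \<in> carrier_vec r" and z: "z \<in> carrier_vec c"
  shows "x \<bullet> (M *\<^sub>v z) = (M\<^sup>T *\<^sub>v x) \<bullet> (z :: real vec)"
proof -
  have "x \<bullet> (M *\<^sub>v z) = (\<Sum>i<r. x $ i * (\<Sum>j<c. M $$ (i,j) * z $ j))"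
    using M x z by (simp add: sp_sum[of _ r] scalar_prod_def atLeast0LessThan row_def)
  also have "\<dots> = (\<Sum>j<c. (\<Sum>i<r. M $$ (i,j) * x $ i) * z $ j)"
    by (simp add: sum_distrib_left sum_distrib_right sum.swap[of _ "{..<c}"] mult_ac)
  also have "\<dots> = (M\<^sup>T *\<^sub>v x) \<bullet> z"
    using M x z by (simp add: sp_sum[OF z] scalar_prod_def atLeast0LessThan row_def)
  finally show ?thesis .
qed

lemma diag_quad:
  assumes "y \<in> carrier_vec n" "length ev = n"
  shows "y \<bullet> (diag_l ev *\<^sub>v y) = (\<Sum>i<n. ev ! i * (y $ i)\<^sup>2)"
proof -
  have D: "diag_l ev \<in> carrier_mat n n" using assms by auto
  have "y \<bullet> (diag_l ev *\<^sub>v y) = (\<Sum>i<n. \<Sum>j<n. y$i * diag_l ev $$(i,j) * y$j)"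
    by (rule quad_sum[OF D assms(1) assms(1)])
  also have "\<dots> = (\<Sum>i<n. \<Sum>j<n. if i = j then ev ! i * (y $ i)\<^sup>2 else 0)"
    using assms by (intro sum.cong refl) (auto simp: power2_eq_square)
  also have "\<dots> = (\<Sum>i<n. ev ! i * (y $ i)\<^sup>2)" by simp
  finally show ?thesis .
qed

lemma sum_list_take: "k \<le> length xs \<Longrightarrow> sum_list (take k xs) = (\<Sum>i<k. (xs ! i :: real))"
  by (simp add: sum_list_sum_nth atLeast0LessThan min_absorb2)

lemma S_k_sum: "k \<le> length (eigenvalues_desc A) \<Longrightarrow> S_k k A = (\<Sum>i<k. eigenvalues_desc A ! i)"
  unfolding S_k_def by (rule sum_list_take)

lemma spec_vecs:
  fixes A :: "real mat"
  assumes A: "A \<in> carrier_mat n n" and sym: "A\<^sup>T = A"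
  shows "\<exists>u. orthonormal n n u \<and> (\<forall>j<n. A *\<^sub>v u j = eigenvalues_desc A ! j \<cdot>\<^sub>v u j)
     \<and> (\<forall>i<n. \<forall>l<n. (\<Sum>j<n. u j $ i * u j $ l) = (if i = l then 1 else 0))"
proof -
  let ?ev = "eigenvalues_desc A"
  have len: "length ?ev = n" by (rule spectral(1)[OF A sym])
  obtain U where U: "U \<in> carrier_mat n n" and UtU: "U\<^sup>T * U = 1\<^sub>m n" and UUt: "U * U\<^sup>T = 1\<^sub>m n"
    and UD: "U\<^sup>T * A * U = diag_l ?ev" using spectral(3)[OF A sym] by blast
  have Ut: "U\<^sup>T \<in> carrier_mat n n" using U by auto
  have D: "diag_l ?ev \<in> carrier_mat n n" using len by auto
  define u where "u j = col U j" for j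
  have uc: "\<And>j. j < n \<Longrightarrow> u j \<in> carrier_vec n" unfolding u_def using U by auto
  have orth: "orthonormal n n u" unfolding orthonormal_def
  proof (intro conjI allI impI)
    fix i j assume i: "i < n" and j: "j < n"
    have "u i \<bullet> u j = (U\<^sup>T * U) $$ (i,j)" unfolding u_def using i j U by (simp add: index_mult_mat row_transpose)
    thus "u i \<bullet> u j = (if i = j then 1 else 0)" unfolding UtU using i j by simp
  qed (use uc in auto)
  have AU: "A * U = U * diag_l ?ev"
  proof -
    have "U * diag_l ?ev = U * (U\<^sup>T * A * U)" unfolding UD ..
    also have "\<dots> = U * (U\<^sup>T * A) * U" using assoc_mult_mat[of U n n "U\<^sup>T * A" n U n] U A by simp
    also have "U * (U\<^sup>T * A) = (U * U\<^sup>T) * A" using assoc3[OF U Ut A] by simp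
    also have "\<dots> = A" unfolding UUt using A by simp
    finally show ?thesis by simp
  qed
  have eig: "\<forall>j<n. A *\<^sub>v u j = ?ev ! j \<cdot>\<^sub>v u j"
  proof (intro allI impI)
    fix j assume j: "j < n"
    show "A *\<^sub>v u j = ?ev ! j \<cdot>\<^sub>v u j"
    proof (rule eq_vecI)
      fix i assume "i < dim_vec (?ev ! j \<cdot>\<^sub>v u j)"
      hence i: "i < n" using uc[OF j] by auto
      have "(A *\<^sub>v u j) $ i = (A * U) $$ (i,j)" unfolding u_def using i j A U by (simp add: index_mult_mat)
      also have "\<dots> = (U * diag_l ?ev) $$ (i,j)" unfolding AU ..
      also have "\<dots> = row U i \<bullet> col (diag_l ?ev) j" using i j U D by (subst index_mult_mat) auto
      also have "\<dots> = (\<Sum>t<n. row U i $ t * col (diag_l ?ev) j $ t)" by (rule sp_sum) (use D j in auto)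
      also have "\<dots> = (\<Sum>t<n. U $$ (i,t) * (if t = j then ?ev ! j else 0))"
        using i j U len by (intro sum.cong refl) auto
      also have "\<dots> = U $$ (i,j) * ?ev ! j" by (simp add: if_distrib cong: if_cong) (use j in auto)
      finally show "(A *\<^sub>v u j) $ i = (?ev ! j \<cdot>\<^sub>v u j) $ i" unfolding u_def using i j U by simp
    qed (use A uc[OF j] in auto)
  qed
  have comp: "\<forall>i<n. \<forall>l<n. (\<Sum>j<n. u j $ i * u j $ l) = (if i = l then 1 else 0)"
  proof (intro allI impI)
    fix i l assume i: "i < n" and l: "l < n"
    have "(U * U\<^sup>T) $$ (i,l) = (\<Sum>j<n. u j $ i * u j $ l)"
      unfolding u_def using i l U by (simp add: index_mult_mat sp_sum[of _ n] row_def)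
    thus "(\<Sum>j<n. u j $ i * u j $ l) = (if i = l then 1 else 0)" unfolding UUt using i l by simp
  qed
  show ?thesis using orth eig comp by blast
qed

lemma prod_sums: "(\<Sum>a\<in>A. \<Sum>b\<in>B. c * p a * q b) = c * ((\<Sum>a\<in>A. p a) * (\<Sum>b\<in>B. (q b :: real)))"
  unfolding sum_distrib_left[symmetric] sum_distrib_right[symmetric] by (simp add: mult.assoc)

lemma swap3: "(\<Sum>a\<in>A. \<Sum>b\<in>B. \<Sum>i\<in>C. f a b i) = (\<Sum>i\<in>C. \<Sum>a\<in>A. \<Sum>b\<in>B. (f a b i :: real))"
proof -
  have "(\<Sum>a\<in>A. \<Sum>b\<in>B. \<Sum>i\<in>C. f a b i) = (\<Sum>a\<in>A. \<Sum>i\<in>C. \<Sum>b\<in>B. f a b i)"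
    by (rule sum.cong[OF refl], rule sum.swap)
  also have "\<dots> = (\<Sum>i\<in>C. \<Sum>a\<in>A. \<Sum>b\<in>B. f a b i)" by (rule sum.swap)
  finally show ?thesis .
qed

lemma spec_expand:
  fixes A :: "real mat"
  assumes A: "A \<in> carrier_mat n n" and orth: "orthonormal n n u"
    and eig: "\<forall>j<n. A *\<^sub>v u j = ev ! j \<cdot>\<^sub>v u j"
    and comp: "\<forall>i<n. \<forall>l<n. (\<Sum>j<n. u j $ i * u j $ l) = (if i = l then 1 else 0)"
    and a: "a < n" and b: "b < n"
  shows "A $$ (a,b) = (\<Sum>i<n. ev ! i * u i $ a * u i $ b)"
proof -
  have uc: "\<And>j. j < n \<Longrightarrow> u j \<in> carrier_vec n" using orth unfolding orthonormal_def by auto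
  have udim: "\<And>j. j < n \<Longrightarrow> dim_vec (u j) = n" using uc by auto
  have "A $$ (a,b) = (\<Sum>c<n. A $$ (a,c) * (if c = b then 1 else 0))" using b by (simp add: if_distrib cong: if_cong)
  also have "\<dots> = (\<Sum>c<n. A $$ (a,c) * (\<Sum>i<n. u i $ c * u i $ b))" using comp b by simp
  also have "\<dots> = (\<Sum>c<n. \<Sum>i<n. A $$ (a,c) * u i $ c * u i $ b)"
    by (simp add: sum_distrib_left mult.assoc)
  also have "\<dots> = (\<Sum>i<n. \<Sum>c<n. A $$ (a,c) * u i $ c * u i $ b)" by (rule sum.swap)
  also have "\<dots> = (\<Sum>i<n. (\<Sum>c<n. A $$ (a,c) * u i $ c) * u i $ b)"
    by (simp add: sum_distrib_right)
  also have "\<dots> = (\<Sum>i<n. (A *\<^sub>v u i) $ a * u i $ b)"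
    using A a uc by (intro sum.cong refl) (simp add: sp_sum[of _ n] row_def)
  also have "\<dots> = (\<Sum>i<n. ev ! i * u i $ a * u i $ b)"
    using eig a uc by (intro sum.cong refl) (simp add: udim)
  finally show ?thesis .
qed

lemma quad_expand:
  fixes A :: "real mat"
  assumes A: "A \<in> carrier_mat n n" and orth: "orthonormal n n u"
    and eig: "\<forall>j<n. A *\<^sub>v u j = ev ! j \<cdot>\<^sub>v u j"
    and comp: "\<forall>i<n. \<forall>l<n. (\<Sum>j<n. u j $ i * u j $ l) = (if i = l then 1 else 0)"
    and z: "z \<in> carrier_vec n"
  shows "z \<bullet> (A *\<^sub>v z) = (\<Sum>i<n. ev ! i * (u i \<bullet> z)\<^sup>2)"
proof -
  have uc: "\<And>j. j < n \<Longrightarrow> u j \<in> carrier_vec n" using orth unfolding orthonormal_def by auto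
  have "z \<bullet> (A *\<^sub>v z) = (\<Sum>a<n. \<Sum>b<n. z$a * A$$(a,b) * z$b)" by (rule quad_sum[OF A z z])
  also have "\<dots> = (\<Sum>a<n. \<Sum>b<n. z$a * (\<Sum>i<n. ev ! i * u i $ a * u i $ b) * z$b)"
    using spec_expand[OF A orth eig comp] by simp
  also have "\<dots> = (\<Sum>a<n. \<Sum>b<n. \<Sum>i<n. ev ! i * (u i $ a * z $ a) * (u i $ b * z $ b))"
    by (simp add: sum_distrib_left sum_distrib_right mult_ac)
  also have "\<dots> = (\<Sum>i<n. \<Sum>a<n. \<Sum>b<n. ev ! i * (u i $ a * z $ a) * (u i $ b * z $ b))"
    by (rule swap3)
  also have "\<dots> = (\<Sum>i<n. ev ! i * ((\<Sum>a<n. u i $ a * z $ a) * (\<Sum>b<n. u i $ b * z $ b)))"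
    by (intro sum.cong refl) (rule prod_sums)
  also have "\<dots> = (\<Sum>i<n. ev ! i * (u i \<bullet> z)\<^sup>2)"
    using sp_sum[OF z] by (simp add: power2_eq_square)
  finally show ?thesis .
qed

lemma parseval:
  assumes comp: "\<forall>i<n. \<forall>l<n. (\<Sum>j<n. u j $ i * u j $ l) = (if i = l then 1 else (0::real))"
    and z: "z \<in> carrier_vec n"
  shows "(\<Sum>i<n. (u i \<bullet> z)\<^sup>2) = z \<bullet> z"
proof -
  have "(\<Sum>i<n. (u i \<bullet> z)\<^sup>2) = (\<Sum>i<n. (\<Sum>a<n. u i $ a * z $ a) * (\<Sum>b<n. u i $ b * z $ b))"
    using sp_sum[OF z] by (simp add: power2_eq_square)
  also have "\<dots> = (\<Sum>i<n. \<Sum>a<n. \<Sum>b<n. z $ a * z $ b * (u i $ a * u i $ b))"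
    by (simp add: sum_product mult_ac)
  also have "\<dots> = (\<Sum>a<n. \<Sum>b<n. \<Sum>i<n. z $ a * z $ b * (u i $ a * u i $ b))"
    by (rule swap3[symmetric])
  also have "\<dots> = (\<Sum>a<n. \<Sum>b<n. z $ a * z $ b * (\<Sum>i<n. u i $ a * u i $ b))"
    by (simp add: sum_distrib_left)
  also have "\<dots> = (\<Sum>a<n. \<Sum>b<n. z $ a * z $ b * (if a = b then 1 else 0))"
    using comp by (intro sum.cong refl) simp
  also have "\<dots> = (\<Sum>a<n. z $ a * z $ a)" by (simp add: if_distrib cong: if_cong)
  also have "\<dots> = z \<bullet> z" using sp_sum[OF z] by simp
  finally show ?thesis .
qed

lemma uc_of: "orthonormal n k u \<Longrightarrow> j < k \<Longrightarrow> u j \<in> carrier_vec n"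
  unfolding orthonormal_def by auto

lemma uu_of: "orthonormal n k u \<Longrightarrow> j < k \<Longrightarrow> u j \<bullet> u j = 1"
  unfolding orthonormal_def by auto

lemma orth_mono: "orthonormal n k u \<Longrightarrow> k' \<le> k \<Longrightarrow> orthonormal n k' u"
  unfolding orthonormal_def by auto

lemma ky_fan:
  fixes A :: "real mat"
  assumes A: "A \<in> carrier_mat n n" and sym: "A\<^sup>T = A"
    and x: "orthonormal n k x" and k: "1 \<le> k" "k \<le> n"
  shows "(\<Sum>j<k. x j \<bullet> (A *\<^sub>v x j)) \<le> S_k k A"
proof -
  let ?ev = "eigenvalues_desc A"
  have len: "length ?ev = n" by (rule spectral(1)[OF A sym])
  have mono: "\<And>i j. i \<le> j \<Longrightarrow> j < n \<Longrightarrow> ?ev ! j \<le> ?ev ! i" by (rule spectral(2)[OF A sym])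
  obtain u where orth: "orthonormal n n u" and eig: "\<forall>j<n. A *\<^sub>v u j = ?ev ! j \<cdot>\<^sub>v u j"
    and comp: "\<forall>i<n. \<forall>l<n. (\<Sum>j<n. u j $ i * u j $ l) = (if i = l then 1 else 0)"
    using spec_vecs[OF A sym] by blast
  define w where "w i = (\<Sum>j<k. (u i \<bullet> x j)\<^sup>2)" for i
  have "(\<Sum>j<k. x j \<bullet> (A *\<^sub>v x j)) = (\<Sum>j<k. \<Sum>i<n. ?ev ! i * (u i \<bullet> x j)\<^sup>2)"
    by (intro sum.cong refl quad_expand[OF A orth eig comp]) (use uc_of[OF x] in auto)
  also have "\<dots> = (\<Sum>i<n. \<Sum>j<k. ?ev ! i * (u i \<bullet> x j)\<^sup>2)" by (rule sum.swap)
  also have "\<dots> = (\<Sum>i<n. ?ev ! i * w i)" unfolding w_def by (simp add: sum_distrib_left)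
  also have "\<dots> \<le> (\<Sum>i<k. ?ev ! i)"
  proof (rule rearr[OF mono _ _ k])
    fix i assume i: "i < n"
    have "w i = (\<Sum>j<k. (x j \<bullet> u i)\<^sup>2)" unfolding w_def
      using uc_of[OF orth i] uc_of[OF x] by (intro sum.cong refl) (metis comm_scalar_prod lessThan_iff)
    also have "\<dots> \<le> u i \<bullet> u i" by (rule bessel[OF x uc_of[OF orth i]])
    also have "\<dots> = 1" by (rule uu_of[OF orth i])
    finally show "0 \<le> w i \<and> w i \<le> 1" unfolding w_def by (auto intro: sum_nonneg)
  next
    have "(\<Sum>i<n. w i) = (\<Sum>j<k. \<Sum>i<n. (u i \<bullet> x j)\<^sup>2)" unfolding w_def by (rule sum.swap)
    also have "\<dots> = (\<Sum>j<k. x j \<bullet> x j)"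
      by (intro sum.cong refl parseval[OF comp]) (use uc_of[OF x] in auto)
    also have "\<dots> = (\<Sum>j<k. 1)" by (intro sum.cong refl) (use uu_of[OF x] in auto)
    finally show "(\<Sum>i<n. w i) = real k" by simp
  qed (auto)
  also have "\<dots> = S_k k A" using S_k_sum[of k A] len k by simp
  finally show ?thesis .
qed

lemma Sk_attain:
  fixes A :: "real mat"
  assumes A: "A \<in> carrier_mat n n" and sym: "A\<^sup>T = A"
  shows "\<exists>u. orthonormal n n u \<and> (\<forall>j<n. A *\<^sub>v u j = eigenvalues_desc A ! j \<cdot>\<^sub>v u j)
     \<and> (\<forall>i<n. \<forall>l<n. (\<Sum>j<n. u j $ i * u j $ l) = (if i = l then 1 else 0))
     \<and> (\<forall>j<n. u j \<bullet> (A *\<^sub>v u j) = eigenvalues_desc A ! j)"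
proof -
  obtain u where orth: "orthonormal n n u" and eig: "\<forall>j<n. A *\<^sub>v u j = eigenvalues_desc A ! j \<cdot>\<^sub>v u j"
    and comp: "\<forall>i<n. \<forall>l<n. (\<Sum>j<n. u j $ i * u j $ l) = (if i = l then 1 else 0)"
    using spec_vecs[OF A sym] by blast
  have "\<forall>j<n. u j \<bullet> (A *\<^sub>v u j) = eigenvalues_desc A ! j"
  proof (intro allI impI)
    fix j assume j: "j < n"
    have "u j \<bullet> (A *\<^sub>v u j) = eigenvalues_desc A ! j * (u j \<bullet> u j)"
      using eig j uc_of[OF orth j] by simp
    thus "u j \<bullet> (A *\<^sub>v u j) = eigenvalues_desc A ! j" using uu_of[OF orth j] by simp
  qed
  thus ?thesis using orth eig comp by blast
qed

lemma quad_lin: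
  fixes X Y :: "real mat"
  assumes X: "X \<in> carrier_mat n n" and Y: "Y \<in> carrier_mat n n" and x: "x \<in> carrier_vec n"
  shows "x \<bullet> ((a \<cdot>\<^sub>m X + b \<cdot>\<^sub>m Y) *\<^sub>v x) = a * (x \<bullet> (X *\<^sub>v x)) + b * (x \<bullet> (Y *\<^sub>v x))"
proof -
  have Z: "a \<cdot>\<^sub>m X + b \<cdot>\<^sub>m Y \<in> carrier_mat n n" using X Y by auto
  have "x \<bullet> ((a \<cdot>\<^sub>m X + b \<cdot>\<^sub>m Y) *\<^sub>v x) = (\<Sum>i<n. \<Sum>j<n. x$i * (a \<cdot>\<^sub>m X + b \<cdot>\<^sub>m Y)$$(i,j) * x$j)"
    by (rule quad_sum[OF Z x x])
  also have "\<dots> = (\<Sum>i<n. \<Sum>j<n. a * (x$i * X$$(i,j) * x$j) + b * (x$i * Y$$(i,j) * x$j))"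
    using X Y by (intro sum.cong refl) (auto simp: algebra_simps)
  also have "\<dots> = a * (\<Sum>i<n. \<Sum>j<n. x$i * X$$(i,j) * x$j) + b * (\<Sum>i<n. \<Sum>j<n. x$i * Y$$(i,j) * x$j)"
    by (simp add: sum.distrib sum_distrib_left)
  also have "\<dots> = a * (x \<bullet> (X *\<^sub>v x)) + b * (x \<bullet> (Y *\<^sub>v x))"
    using quad_sum[OF X x x] quad_sum[OF Y x x] by simp
  finally show ?thesis .
qed

lemma Sk_comb:
  fixes X Y :: "real mat"
  assumes X: "X \<in> carrier_mat n n" and Xs: "X\<^sup>T = X" and Y: "Y \<in> carrier_mat n n" and Ys: "Y\<^sup>T = Y"
    and a: "0 \<le> a" and b: "0 \<le> b" and k: "1 \<le> k" "k \<le> n"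
  shows "S_k k (a \<cdot>\<^sub>m X + b \<cdot>\<^sub>m Y) \<le> a * S_k k X + b * S_k k Y"
proof -
  let ?Z = "a \<cdot>\<^sub>m X + b \<cdot>\<^sub>m Y"
  have Z: "?Z \<in> carrier_mat n n" using X Y by auto
  have Zs: "?Z\<^sup>T = ?Z"
    by (rule eq_matI) (use X Y sym_entry[OF X Xs] sym_entry[OF Y Ys] in auto)
  obtain u where orth: "orthonormal n n u" and q: "\<forall>j<n. u j \<bullet> (?Z *\<^sub>v u j) = eigenvalues_desc ?Z ! j"
    using Sk_attain[OF Z Zs] by blast
  have len: "length (eigenvalues_desc ?Z) = n" by (rule spectral(1)[OF Z Zs])
  have ok: "orthonormal n k u" using orth_mono[OF orth k(2)] .
  have "S_k k ?Z = (\<Sum>j<k. eigenvalues_desc ?Z ! j)" using S_k_sum[of k ?Z] len k by simp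
  also have "\<dots> = (\<Sum>j<k. u j \<bullet> (?Z *\<^sub>v u j))" using q k by auto
  also have "\<dots> = (\<Sum>j<k. a * (u j \<bullet> (X *\<^sub>v u j)) + b * (u j \<bullet> (Y *\<^sub>v u j)))"
    by (intro sum.cong refl quad_lin[OF X Y]) (use uc_of[OF ok] in auto)
  also have "\<dots> = a * (\<Sum>j<k. u j \<bullet> (X *\<^sub>v u j)) + b * (\<Sum>j<k. u j \<bullet> (Y *\<^sub>v u j))"
    by (simp add: sum.distrib sum_distrib_left)
  also have "\<dots> \<le> a * S_k k X + b * S_k k Y"
    by (intro add_mono mult_left_mono ky_fan[OF X Xs ok k] ky_fan[OF Y Ys ok k] a b)
  finally show ?thesis .
qed

lemma Sk_upper:
  fixes X :: "real mat"
  assumes X: "X \<in> carrier_mat n n" and Xs: "X\<^sup>T = X" and k: "k \<le> n"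
    and bd: "\<And>x. x \<in> carrier_vec n \<Longrightarrow> x \<bullet> (X *\<^sub>v x) \<le> \<beta> * (x \<bullet> x)"
  shows "S_k k X \<le> real k * \<beta>"
proof -
  obtain u where orth: "orthonormal n n u" and q: "\<forall>j<n. u j \<bullet> (X *\<^sub>v u j) = eigenvalues_desc X ! j"
    using Sk_attain[OF X Xs] by blast
  have len: "length (eigenvalues_desc X) = n" by (rule spectral(1)[OF X Xs])
  have "S_k k X = (\<Sum>j<k. eigenvalues_desc X ! j)" using S_k_sum[of k X] len k by simp
  also have "\<dots> \<le> (\<Sum>j<k. \<beta>)"
  proof (rule sum_mono)
    fix j assume "j \<in> {..<k}"
    hence j: "j < n" using k by auto
    have "eigenvalues_desc X ! j = u j \<bullet> (X *\<^sub>v u j)" using q j by auto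
    also have "\<dots> \<le> \<beta> * (u j \<bullet> u j)" by (rule bd[OF uc_of[OF orth j]])
    finally show "eigenvalues_desc X ! j \<le> \<beta>" using uu_of[OF orth j] by simp
  qed
  finally show ?thesis by simp
qed

lemma Sk_lower:
  fixes X :: "real mat"
  assumes X: "X \<in> carrier_mat n n" and Xs: "X\<^sup>T = X" and k: "1 \<le> k" "k \<le> n"
    and z: "z \<in> carrier_vec n" "z \<bullet> z = 1"
    and bd: "\<And>x. x \<in> carrier_vec n \<Longrightarrow> c * (x \<bullet> x) \<le> x \<bullet> (X *\<^sub>v x)"
  shows "z \<bullet> (X *\<^sub>v z) + (real k - 1) * c \<le> S_k k X"
proof -
  obtain u where orth: "orthonormal n n u" and q: "\<forall>j<n. u j \<bullet> (X *\<^sub>v u j) = eigenvalues_desc X ! j"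
    using Sk_attain[OF X Xs] by blast
  have len: "length (eigenvalues_desc X) = n" by (rule spectral(1)[OF X Xs])
  have oz: "orthonormal n 1 (\<lambda>_. z)" unfolding orthonormal_def using z by auto
  have "z \<bullet> (X *\<^sub>v z) \<le> S_k 1 X" using ky_fan[OF X Xs oz _ ] k by simp
  also have "S_k 1 X = eigenvalues_desc X ! 0" using S_k_sum[of 1 X] len k by simp
  finally have e0: "z \<bullet> (X *\<^sub>v z) \<le> eigenvalues_desc X ! 0" .
  obtain m where m: "k = Suc m" using k by (cases k) auto
  have "S_k k X = (\<Sum>j<Suc m. eigenvalues_desc X ! j)" using S_k_sum[of k X] len k m by simp
  also have "\<dots> = eigenvalues_desc X ! 0 + (\<Sum>j<m. eigenvalues_desc X ! Suc j)"
    by (rule sum.lessThan_Suc_shift)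
  finally have Sk: "S_k k X = eigenvalues_desc X ! 0 + (\<Sum>j<m. eigenvalues_desc X ! Suc j)" .
  have "(\<Sum>j<m. c) \<le> (\<Sum>j<m. eigenvalues_desc X ! Suc j)"
  proof (rule sum_mono)
    fix j assume "j \<in> {..<m}"
    hence j: "Suc j < n" using k m by auto
    have "c = c * (u (Suc j) \<bullet> u (Suc j))" using uu_of[OF orth j] by simp
    also have "\<dots> \<le> u (Suc j) \<bullet> (X *\<^sub>v u (Suc j))" by (rule bd[OF uc_of[OF orth j]])
    also have "\<dots> = eigenvalues_desc X ! Suc j" using q j by auto
    finally show "c \<le> eigenvalues_desc X ! Suc j" .
  qed
  hence "real m * c \<le> (\<Sum>j<m. eigenvalues_desc X ! Suc j)" by simp
  thus ?thesis using Sk e0 m by simp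
qed

lemma Sk_trace:
  fixes X :: "real mat"
  assumes X: "X \<in> carrier_mat n n" and Xs: "X\<^sup>T = X"
  shows "S_k n X = (\<Sum>a<n. X $$ (a,a))"
proof -
  let ?ev = "eigenvalues_desc X"
  obtain u where orth: "orthonormal n n u" and eig: "\<forall>j<n. X *\<^sub>v u j = ?ev ! j \<cdot>\<^sub>v u j"
    and comp: "\<forall>i<n. \<forall>l<n. (\<Sum>j<n. u j $ i * u j $ l) = (if i = l then 1 else 0)"
    using spec_vecs[OF X Xs] by blast
  have len: "length ?ev = n" by (rule spectral(1)[OF X Xs])
  have "(\<Sum>a<n. X $$ (a,a)) = (\<Sum>a<n. \<Sum>i<n. ?ev ! i * u i $ a * u i $ a)"
    by (intro sum.cong refl spec_expand[OF X orth eig comp]) auto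
  also have "\<dots> = (\<Sum>i<n. \<Sum>a<n. ?ev ! i * u i $ a * u i $ a)" by (rule sum.swap)
  also have "\<dots> = (\<Sum>i<n. ?ev ! i * (\<Sum>a<n. u i $ a * u i $ a))"
    by (simp add: sum_distrib_left mult.assoc)
  also have "\<dots> = (\<Sum>i<n. ?ev ! i)"
    using uu_of[OF orth] sp_sum[OF uc_of[OF orth]] by (intro sum.cong refl) auto
  also have "\<dots> = S_k n X" using S_k_sum[of n X] len by simp
  finally show ?thesis by simp
qed

lemma cs_sum: "(\<Sum>j<k. f j)\<^sup>2 \<le> real k * (\<Sum>j<k. (f j :: real)\<^sup>2)"
proof -
  have e1: "(\<Sum>j<k. \<Sum>l<k. (f j)\<^sup>2) = real k * (\<Sum>j<k. (f j)\<^sup>2)" by (simp add: sum_distrib_left)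
  have e2: "(\<Sum>j<k. \<Sum>l<k. (f l)\<^sup>2) = real k * (\<Sum>j<k. (f j)\<^sup>2)" by simp
  have e3: "(\<Sum>j<k. \<Sum>l<k. f j * f l) = (\<Sum>j<k. f j)\<^sup>2" by (simp add: power2_eq_square sum_product)
  have "(\<Sum>j<k. \<Sum>l<k. (f j - f l)\<^sup>2) = (\<Sum>j<k. \<Sum>l<k. (f j)\<^sup>2 + (f l)\<^sup>2 - 2 * (f j * f l))"
    by (simp add: power2_diff mult.assoc)
  also have "\<dots> = (\<Sum>j<k. \<Sum>l<k. (f j)\<^sup>2) + (\<Sum>j<k. \<Sum>l<k. (f l)\<^sup>2) - 2 * (\<Sum>j<k. \<Sum>l<k. f j * f l)"
    by (simp only: sum.distrib sum_subtractf sum_distrib_left)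
  finally have "(\<Sum>j<k. \<Sum>l<k. (f j - f l)\<^sup>2) = 2 * (real k * (\<Sum>j<k. (f j)\<^sup>2)) - 2 * (\<Sum>j<k. f j)\<^sup>2"
    unfolding e1 e2 e3 by simp
  moreover have "0 \<le> (\<Sum>j<k. \<Sum>l<k. (f j - f l)\<^sup>2)" by (intro sum_nonneg) auto
  ultimately show ?thesis by simp
qed

lemma Sk_sq:
  fixes X :: "real mat"
  assumes X: "X \<in> carrier_mat n n" and Xs: "X\<^sup>T = X" and k: "k \<le> n"
  shows "(S_k k X)\<^sup>2 \<le> real k * (\<Sum>a<n. \<Sum>b<n. (X $$ (a,b))\<^sup>2)"
proof -
  let ?ev = "eigenvalues_desc X"
  obtain u where orth: "orthonormal n n u" and eig: "\<forall>j<n. X *\<^sub>v u j = ?ev ! j \<cdot>\<^sub>v u j"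
    and comp: "\<forall>i<n. \<forall>l<n. (\<Sum>j<n. u j $ i * u j $ l) = (if i = l then 1 else 0)"
    using spec_vecs[OF X Xs] by blast
  have len: "length ?ev = n" by (rule spectral(1)[OF X Xs])
  have row: "\<And>a. a < n \<Longrightarrow> (\<Sum>b<n. (X $$ (a,b))\<^sup>2) = (\<Sum>i<n. (?ev ! i)\<^sup>2 * (u i $ a)\<^sup>2)"
  proof -
    fix a assume a: "a < n"
    have rc: "row X a \<in> carrier_vec n" using X by auto
    have "(\<Sum>b<n. (X $$ (a,b))\<^sup>2) = row X a \<bullet> row X a"
      using sp_sum[OF rc] X a by (simp add: power2_eq_square)
    also have "\<dots> = (\<Sum>i<n. (u i \<bullet> row X a)\<^sup>2)" by (rule parseval[OF comp rc, symmetric])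
    also have "\<dots> = (\<Sum>i<n. (?ev ! i)\<^sup>2 * (u i $ a)\<^sup>2)"
    proof (intro sum.cong refl)
      fix i assume "i \<in> {..<n}"
      hence i: "i < n" by auto
      have "u i \<bullet> row X a = row X a \<bullet> u i" using comm_scalar_prod[OF uc_of[OF orth i] rc] .
      also have "\<dots> = (X *\<^sub>v u i) $ a" using a X by simp
      also have "\<dots> = ?ev ! i * u i $ a" using eig i a uc_of[OF orth i] by simp
      finally show "(u i \<bullet> row X a)\<^sup>2 = (?ev ! i)\<^sup>2 * (u i $ a)\<^sup>2" by (simp add: power_mult_distrib)
    qed
    finally show "(\<Sum>b<n. (X $$ (a,b))\<^sup>2) = (\<Sum>i<n. (?ev ! i)\<^sup>2 * (u i $ a)\<^sup>2)" .
  qed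
  have "(\<Sum>a<n. \<Sum>b<n. (X $$ (a,b))\<^sup>2) = (\<Sum>a<n. \<Sum>i<n. (?ev ! i)\<^sup>2 * (u i $ a)\<^sup>2)"
    using row by simp
  also have "\<dots> = (\<Sum>i<n. \<Sum>a<n. (?ev ! i)\<^sup>2 * (u i $ a)\<^sup>2)" by (rule sum.swap)
  also have "\<dots> = (\<Sum>i<n. (?ev ! i)\<^sup>2 * (\<Sum>a<n. u i $ a * u i $ a))"
    by (simp add: sum_distrib_left power2_eq_square)
  also have "\<dots> = (\<Sum>i<n. (?ev ! i)\<^sup>2)"
    using uu_of[OF orth] sp_sum[OF uc_of[OF orth]] by (intro sum.cong refl) auto
  finally have fro: "(\<Sum>a<n. \<Sum>b<n. (X $$ (a,b))\<^sup>2) = (\<Sum>i<n. (?ev ! i)\<^sup>2)" .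
  have "(S_k k X)\<^sup>2 = (\<Sum>j<k. ?ev ! j)\<^sup>2" using S_k_sum[of k X] len k by simp
  also have "\<dots> \<le> real k * (\<Sum>j<k. (?ev ! j)\<^sup>2)" by (rule cs_sum)
  also have "(\<Sum>j<k. (?ev ! j)\<^sup>2) \<le> (\<Sum>j<n. (?ev ! j)\<^sup>2)"
    by (rule sum_mono2) (use k in auto)
  finally show ?thesis unfolding fro by (simp add: mult_left_mono)
qed

lemma sg_sym: "simple_graph n E \<Longrightarrow> i < n \<Longrightarrow> j < n \<Longrightarrow> E i j = E j i"
  unfolding simple_graph_def by auto

lemma sg_irr: "simple_graph n E \<Longrightarrow> i < n \<Longrightarrow> \<not> E i i"
  unfolding simple_graph_def by auto

lemma mat_sym: "(\<And>i j. i < n \<Longrightarrow> j < n \<Longrightarrow> f (i,j) = f (j,i)) \<Longrightarrow> (mat n n f)\<^sup>T = mat n n f"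
  by (rule eq_matI) auto

lemma adj_carrier[simp]: "adj_mat n E \<in> carrier_mat n n" unfolding adj_mat_def by simp
lemma deg_carrier[simp]: "deg_mat n E \<in> carrier_mat n n" unfolding deg_mat_def by simp

lemma adj_sym: "simple_graph n E \<Longrightarrow> (adj_mat n E)\<^sup>T = adj_mat n E"
  unfolding adj_mat_def by (rule mat_sym) (auto dest: sg_sym)

lemma adjc_sym: "simple_graph n E \<Longrightarrow> (adj_mat n (complement E))\<^sup>T = adj_mat n (complement E)"
  unfolding adj_mat_def complement_def by (rule mat_sym) (auto dest: sg_sym)

lemma deg_sym: "(deg_mat n E)\<^sup>T = deg_mat n E"
  unfolding deg_mat_def by (rule mat_sym) auto

lemma quad_mat: "x \<in> carrier_vec n \<Longrightarrow> x \<bullet> (mat n n f *\<^sub>v x) = (\<Sum>i<n. \<Sum>j<n. x$i * f (i,j) * (x$j :: real))"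
  by (subst quad_sum[of _ n]) auto

lemma xx_sum: "x \<in> carrier_vec n \<Longrightarrow> x \<bullet> x = (\<Sum>i<n. (x$i :: real)\<^sup>2)"
  using sp_sum by (simp add: power2_eq_square)

lemma q_deg: "x \<in> carrier_vec n \<Longrightarrow> x \<bullet> (deg_mat n E *\<^sub>v x) = (\<Sum>i<n. real (degree n E i) * (x$i)\<^sup>2)"
proof -
  assume x: "x \<in> carrier_vec n"
  have "x \<bullet> (deg_mat n E *\<^sub>v x) = (\<Sum>i<n. \<Sum>j<n. x$i * (if i = j then real (degree n E i) else 0) * x$j)"
    unfolding deg_mat_def quad_mat[OF x] by simp
  also have "\<dots> = (\<Sum>i<n. \<Sum>j<n. if i = j then real (degree n E i) * (x$i)\<^sup>2 else 0)"
    by (intro sum.cong refl) (auto simp: power2_eq_square)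
  also have "\<dots> = (\<Sum>i<n. real (degree n E i) * (x$i)\<^sup>2)" by simp
  finally show ?thesis .
qed

lemma deg_compl:
  assumes sg: "simple_graph n E" and i: "i < n"
  shows "real (degree n (complement E) i) = real n - 1 - real (degree n E i)"
proof -
  have eq: "{j. j < n \<and> complement E i j} = ({..<n} - {i}) - {j. j < n \<and> E i j}"
    unfolding complement_def by auto
  have sub: "{j. j < n \<and> E i j} \<subseteq> {..<n} - {i}" using sg_irr[OF sg i] by auto
  have c1: "card ({..<n} - {i}) = n - 1" using i by simp
  have "card {j. j < n \<and> complement E i j} = (n - 1) - card {j. j < n \<and> E i j}"
    unfolding eq by (subst card_Diff_subset) (use sub c1 in auto)
  moreover have "card {j. j < n \<and> E i j} \<le> n - 1"
    using card_mono[OF _ sub] c1 by auto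
  ultimately show ?thesis unfolding degree_def using i by (simp add: of_nat_diff)
qed

lemma deg_le_max: "i < n \<Longrightarrow> degree n E i \<le> max_degree n E"
  unfolding max_degree_def by (intro Max_ge) auto

lemma min_le_deg: "i < n \<Longrightarrow> min_degree n E \<le> degree n E i"
  unfolding min_degree_def by (intro Min_le) auto

lemma Dg_upper:
  assumes x: "x \<in> carrier_vec n"
  shows "x \<bullet> (deg_mat n E *\<^sub>v x) \<le> real (max_degree n E) * (x \<bullet> x)"
proof -
  have "x \<bullet> (deg_mat n E *\<^sub>v x) = (\<Sum>i<n. real (degree n E i) * (x$i)\<^sup>2)" by (rule q_deg[OF x])
  also have "\<dots> \<le> (\<Sum>i<n. real (max_degree n E) * (x$i)\<^sup>2)"
    by (intro sum_mono mult_right_mono) (auto simp: deg_le_max)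
  also have "\<dots> = real (max_degree n E) * (x \<bullet> x)" using xx_sum[OF x] by (simp add: sum_distrib_left)
  finally show ?thesis .
qed

lemma DgC_upper:
  assumes sg: "simple_graph n E" and x: "x \<in> carrier_vec n"
  shows "x \<bullet> (deg_mat n (complement E) *\<^sub>v x) \<le> (real n - 1 - real (min_degree n E)) * (x \<bullet> x)"
proof -
  have "x \<bullet> (deg_mat n (complement E) *\<^sub>v x) = (\<Sum>i<n. real (degree n (complement E) i) * (x$i)\<^sup>2)"
    by (rule q_deg[OF x])
  also have "\<dots> \<le> (\<Sum>i<n. (real n - 1 - real (min_degree n E)) * (x$i)\<^sup>2)"
    by (intro sum_mono mult_right_mono) (auto simp: deg_compl[OF sg] min_le_deg)
  also have "\<dots> = (real n - 1 - real (min_degree n E)) * (x \<bullet> x)" using xx_sum[OF x] by (simp add: sum_distrib_left)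
  finally show ?thesis .
qed

lemma q_deg_pair:
  assumes sg: "simple_graph n E" and x: "x \<in> carrier_vec n"
  shows "x \<bullet> (deg_mat n E *\<^sub>v x) + x \<bullet> (deg_mat n (complement E) *\<^sub>v x) = (real n - 1) * (x \<bullet> x)"
proof -
  have "x \<bullet> (deg_mat n E *\<^sub>v x) + x \<bullet> (deg_mat n (complement E) *\<^sub>v x)
     = (\<Sum>i<n. (real (degree n E i) + real (degree n (complement E) i)) * (x$i)\<^sup>2)"
    unfolding q_deg[OF x] by (simp add: sum.distrib algebra_simps)
  also have "\<dots> = (\<Sum>i<n. (real n - 1) * (x$i)\<^sup>2)"
    by (intro sum.cong refl) (simp add: deg_compl[OF sg])
  also have "\<dots> = (real n - 1) * (x \<bullet> x)" using xx_sum[OF x] by (simp add: sum_distrib_left)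
  finally show ?thesis .
qed

lemma q_adj_pair:
  assumes sg: "simple_graph n E" and x: "x \<in> carrier_vec n"
  shows "x \<bullet> (adj_mat n E *\<^sub>v x) + x \<bullet> (adj_mat n (complement E) *\<^sub>v x) = (\<Sum>i<n. x$i)\<^sup>2 - x \<bullet> x"
proof -
  have "x \<bullet> (adj_mat n E *\<^sub>v x) + x \<bullet> (adj_mat n (complement E) *\<^sub>v x)
     = (\<Sum>i<n. \<Sum>j<n. x$i * ((if E i j then 1 else 0) + (if complement E i j then 1 else 0)) * x$j)"
    unfolding adj_mat_def quad_mat[OF x] by (simp add: sum.distrib algebra_simps)
  also have "\<dots> = (\<Sum>i<n. \<Sum>j<n. x$i * x$j - (if i = j then x$i * x$j else 0))"
    using sg_irr[OF sg] by (intro sum.cong refl) (auto simp: complement_def)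
  also have "\<dots> = (\<Sum>i<n. x$i)\<^sup>2 - (\<Sum>i<n. (x$i)\<^sup>2)"
    by (simp add: sum_subtractf power2_eq_square sum_product)
  also have "\<dots> = (\<Sum>i<n. x$i)\<^sup>2 - x \<bullet> x" using xx_sum[OF x] by simp
  finally show ?thesis .
qed

lemma fro_pair:
  assumes sg: "simple_graph n E"
  shows "(\<Sum>a<n. \<Sum>b<n. (adj_mat n E $$ (a,b))\<^sup>2) + (\<Sum>a<n. \<Sum>b<n. (adj_mat n (complement E) $$ (a,b))\<^sup>2)
       = real n * real n - real n"
proof -
  have "(\<Sum>a<n. \<Sum>b<n. (adj_mat n E $$ (a,b))\<^sup>2) + (\<Sum>a<n. \<Sum>b<n. (adj_mat n (complement E) $$ (a,b))\<^sup>2)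
     = (\<Sum>a<n. \<Sum>b<n. 1 - (if a = b then 1 else 0))"
    unfolding sum.distrib[symmetric] adj_mat_def using sg_irr[OF sg]
    by (intro sum.cong refl) (auto simp: complement_def)
  also have "\<dots> = (\<Sum>a<n. real n - 1)" by (simp add: sum_subtractf)
  also have "\<dots> = real n * real n - real n" by (simp add: algebra_simps)
  finally show ?thesis .
qed

lemma trace_adj: "simple_graph n E \<Longrightarrow> (\<Sum>a<n. adj_mat n E $$ (a,a)) = 0"
  unfolding adj_mat_def by (simp add: sg_irr)

lemma trace_adjc: "(\<Sum>a<n. adj_mat n (complement E) $$ (a,a)) = 0"
  unfolding adj_mat_def complement_def by simp

lemma arith_bd:
  fixes k n :: real
  assumes k: "1 \<le> k" and kn: "k + 1 \<le> n"
  shows "2 * k * (n * n - n) \<le> (k * (2 * n - k - 1))\<^sup>2"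
proof -
  have e: "(k - 1) * (2 * n - 2 - k) = k * (2 * n - k - 1) - 2 * (n - 1)" by (simp add: algebra_simps)
  have "0 \<le> (k - 1) * (2 * n - 2 - k)" using k kn by (intro mult_nonneg_nonneg) auto
  hence h1: "2 * (n - 1) \<le> k * (2 * n - k - 1)" using e by simp
  have h2: "n \<le> 2 * n - k - 1" using kn by simp
  have "2 * (n - 1) * n \<le> k * (2 * n - k - 1) * (2 * n - k - 1)"
    by (rule mult_mono[OF h1 h2]) (use k kn in auto)
  hence "k * (2 * (n - 1) * n) \<le> k * (k * (2 * n - k - 1) * (2 * n - k - 1))"
    by (rule mult_left_mono) (use k in auto)
  thus ?thesis by (simp add: power2_eq_square algebra_simps)
qed

lemma adj_pair_bound:
  assumes sg: "simple_graph n E" and k: "1 \<le> k" "k \<le> n"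
  shows "S_k k (adj_mat n E) + S_k k (adj_mat n (complement E)) \<le> real k * (2 * real n - real k - 1)"
proof (cases "k = n")
  case True
  have "S_k k (adj_mat n E) = 0" unfolding True using Sk_trace[OF adj_carrier adj_sym[OF sg]] trace_adj[OF sg] by simp
  moreover have "S_k k (adj_mat n (complement E)) = 0"
    unfolding True using Sk_trace[OF adj_carrier adjc_sym[OF sg]] trace_adjc by simp
  moreover have "0 \<le> real k * (2 * real n - real k - 1)" using True k by auto
  ultimately show ?thesis by simp
next
  case False
  hence kn: "k + 1 \<le> n" using k by auto
  define s1 where "s1 = S_k k (adj_mat n E)"
  define s2 where "s2 = S_k k (adj_mat n (complement E))"
  define F1 where "F1 = (\<Sum>a<n. \<Sum>b<n. (adj_mat n E $$ (a,b))\<^sup>2)"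
  define F2 where "F2 = (\<Sum>a<n. \<Sum>b<n. (adj_mat n (complement E) $$ (a,b))\<^sup>2)"
  have q1: "s1\<^sup>2 \<le> real k * F1" unfolding s1_def F1_def by (rule Sk_sq[OF adj_carrier adj_sym[OF sg] k(2)])
  have q2: "s2\<^sup>2 \<le> real k * F2" unfolding s2_def F2_def by (rule Sk_sq[OF adj_carrier adjc_sym[OF sg] k(2)])
  have F: "F1 + F2 = real n * real n - real n" unfolding F1_def F2_def by (rule fro_pair[OF sg])
  have "(s1 + s2)\<^sup>2 \<le> 2 * (s1\<^sup>2 + s2\<^sup>2)"
  proof -
    have h: "(s1 + s2)\<^sup>2 + (s1 - s2)\<^sup>2 = 2 * (s1\<^sup>2 + s2\<^sup>2)" by (simp add: power2_eq_square algebra_simps)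
    have "0 \<le> (s1 - s2)\<^sup>2" by simp
    thus ?thesis using h by linarith
  qed
  also have "\<dots> \<le> 2 * (real k * F1 + real k * F2)" using q1 q2 by simp
  also have "\<dots> = 2 * real k * (F1 + F2)" by (simp add: algebra_simps)
  also have "\<dots> = 2 * real k * (real n * real n - real n)" unfolding F ..
  also have "\<dots> \<le> (real k * (2 * real n - real k - 1))\<^sup>2"
    by (rule arith_bd) (use k kn in auto)
  finally have "(s1 + s2)\<^sup>2 \<le> (real k * (2 * real n - real k - 1))\<^sup>2" .
  moreover have "0 \<le> real k * (2 * real n - real k - 1)" using kn by auto
  ultimately show ?thesis unfolding s1_def s2_def by (rule power2_le_imp_le)
qed

lemma comb_sym:
  assumes "X \<in> carrier_mat n n" "X\<^sup>T = X" "Y \<in> carrier_mat n n" "Y\<^sup>T = Y"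
  shows "(a \<cdot>\<^sub>m X + b \<cdot>\<^sub>m Y)\<^sup>T = a \<cdot>\<^sub>m X + b \<cdot>\<^sub>m (Y :: real mat)"
  by (rule eq_matI) (use assms sym_entry[OF assms(1,2)] sym_entry[OF assms(3,4)] in auto)

theorem theorem6p1:
  fixes n k :: nat and E :: "nat \<Rightarrow> nat \<Rightarrow> bool" and \<alpha> :: real
  assumes "simple_graph n E"
    and "0 \<le> \<alpha>" and "\<alpha> \<le> 1"
    and "1 \<le> k" and "k \<le> n"
  shows "(1 - \<alpha>) * real n + (\<alpha> * real n - 1) * real k
           \<le> S_k k (A_alpha \<alpha> n E) + S_k k (A_alpha \<alpha> n (complement E))
         \<and> S_k k (A_alpha \<alpha> n E) + S_k k (A_alpha \<alpha> n (complement E))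
           \<le> real k * ((2 - \<alpha>) * real n
                + \<alpha> * (real (max_degree n E) - real (min_degree n E) - 1)
                - (1 - \<alpha>) * (real k + 1))"
proof -
  note sg = assms(1) and a0 = assms(2) and a1 = assms(3) and k = assms(4,5)
  let ?D = "deg_mat n E" and ?Dc = "deg_mat n (complement E)"
  let ?Ad = "adj_mat n E" and ?Ac = "adj_mat n (complement E)"
  let ?M = "A_alpha \<alpha> n E" and ?N = "A_alpha \<alpha> n (complement E)"
  have b0: "0 \<le> 1 - \<alpha>" using a1 by simp
  have D: "?D \<in> carrier_mat n n" "?D\<^sup>T = ?D" by (simp, rule deg_sym)
  have Dc: "?Dc \<in> carrier_mat n n" "?Dc\<^sup>T = ?Dc" by (simp, rule deg_sym)
  have Ad: "?Ad \<in> carrier_mat n n" "?Ad\<^sup>T = ?Ad" by (simp, rule adj_sym[OF sg])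
  have Ac: "?Ac \<in> carrier_mat n n" "?Ac\<^sup>T = ?Ac" by (simp, rule adjc_sym[OF sg])
  have Mdef: "?M = \<alpha> \<cdot>\<^sub>m ?D + (1 - \<alpha>) \<cdot>\<^sub>m ?Ad" unfolding A_alpha_def ..
  have Ndef: "?N = \<alpha> \<cdot>\<^sub>m ?Dc + (1 - \<alpha>) \<cdot>\<^sub>m ?Ac" unfolding A_alpha_def ..
  have M: "?M \<in> carrier_mat n n" "?M\<^sup>T = ?M" unfolding Mdef using D Ad comb_sym[OF D(1) D(2) Ad(1) Ad(2)] by auto
  have N: "?N \<in> carrier_mat n n" "?N\<^sup>T = ?N" unfolding Ndef using Dc Ac comb_sym[OF Dc(1) Dc(2) Ac(1) Ac(2)] by auto
  have qM: "\<And>x. x \<in> carrier_vec n \<Longrightarrow> x \<bullet> (?M *\<^sub>v x) = \<alpha> * (x \<bullet> (?D *\<^sub>v x)) + (1 - \<alpha>) * (x \<bullet> (?Ad *\<^sub>v x))"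
    unfolding Mdef by (rule quad_lin[OF D(1) Ad(1)])
  have qN: "\<And>x. x \<in> carrier_vec n \<Longrightarrow> x \<bullet> (?N *\<^sub>v x) = \<alpha> * (x \<bullet> (?Dc *\<^sub>v x)) + (1 - \<alpha>) * (x \<bullet> (?Ac *\<^sub>v x))"
    unfolding Ndef by (rule quad_lin[OF Dc(1) Ac(1)])
  let ?Z = "1 \<cdot>\<^sub>m ?M + 1 \<cdot>\<^sub>m ?N"
  have Z: "?Z \<in> carrier_mat n n" "?Z\<^sup>T = ?Z" using M N comb_sym[OF M(1) M(2) N(1) N(2)] by auto
  have qZ: "\<And>x. x \<in> carrier_vec n \<Longrightarrow> x \<bullet> (?Z *\<^sub>v x) = (\<alpha> * real n - 1) * (x \<bullet> x) + (1 - \<alpha>) * (\<Sum>i<n. x$i)\<^sup>2"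
  proof -
    fix x :: "real vec" assume x: "x \<in> carrier_vec n"
    have "x \<bullet> (?Z *\<^sub>v x) = x \<bullet> (?M *\<^sub>v x) + x \<bullet> (?N *\<^sub>v x)" using quad_lin[OF M(1) N(1) x, of 1 1] by simp
    also have "\<dots> = \<alpha> * (x \<bullet> (?D *\<^sub>v x) + x \<bullet> (?Dc *\<^sub>v x)) + (1 - \<alpha>) * (x \<bullet> (?Ad *\<^sub>v x) + x \<bullet> (?Ac *\<^sub>v x))"
      unfolding qM[OF x] qN[OF x] by (simp add: algebra_simps)
    also have "\<dots> = \<alpha> * ((real n - 1) * (x \<bullet> x)) + (1 - \<alpha>) * ((\<Sum>i<n. x$i)\<^sup>2 - x \<bullet> x)"
      unfolding q_deg_pair[OF sg x] q_adj_pair[OF sg x] ..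
    also have "\<dots> = (\<alpha> * real n - 1) * (x \<bullet> x) + (1 - \<alpha>) * (\<Sum>i<n. x$i)\<^sup>2" by (simp add: algebra_simps)
    finally show "x \<bullet> (?Z *\<^sub>v x) = (\<alpha> * real n - 1) * (x \<bullet> x) + (1 - \<alpha>) * (\<Sum>i<n. x$i)\<^sup>2" .
  qed
  have n0: "0 < n" using k by auto
  define z where "z = vec n (\<lambda>_. 1 / sqrt (real n))"
  have zc: "z \<in> carrier_vec n" unfolding z_def by simp
  have zz: "z \<bullet> z = 1"
    unfolding xx_sum[OF zc] unfolding z_def using n0 by (simp add: power_divide)
  have zs: "(\<Sum>i<n. z$i)\<^sup>2 = real n"
  proof -
    have "(\<Sum>i<n. z$i) = real n / sqrt (real n)" unfolding z_def by simp
    thus ?thesis using n0 by (simp add: power_divide power2_eq_square)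
  qed
  have lowZ: "(z \<bullet> (?Z *\<^sub>v z)) + (real k - 1) * (\<alpha> * real n - 1) \<le> S_k k ?Z"
  proof (rule Sk_lower[OF Z k zc zz])
    fix x :: "real vec" assume x: "x \<in> carrier_vec n"
    show "(\<alpha> * real n - 1) * (x \<bullet> x) \<le> x \<bullet> (?Z *\<^sub>v x)"
      unfolding qZ[OF x] using b0 by simp
  qed
  have SZ: "S_k k ?Z \<le> 1 * S_k k ?M + 1 * S_k k ?N" by (rule Sk_comb[OF M N]) (use k in auto)
  have low: "(1 - \<alpha>) * real n + (\<alpha> * real n - 1) * real k \<le> S_k k ?M + S_k k ?N"
  proof -
    have "(1 - \<alpha>) * real n + (\<alpha> * real n - 1) * real k = (z \<bullet> (?Z *\<^sub>v z)) + (real k - 1) * (\<alpha> * real n - 1)"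
      unfolding qZ[OF zc] zz zs by (simp add: algebra_simps)
    also have "\<dots> \<le> S_k k ?Z" by (rule lowZ)
    also have "\<dots> \<le> S_k k ?M + S_k k ?N" using SZ by simp
    finally show ?thesis .
  qed
  have SM: "S_k k ?M \<le> \<alpha> * S_k k ?D + (1 - \<alpha>) * S_k k ?Ad"
    unfolding Mdef by (rule Sk_comb[OF D Ad a0 b0 k])
  have SN: "S_k k ?N \<le> \<alpha> * S_k k ?Dc + (1 - \<alpha>) * S_k k ?Ac"
    unfolding Ndef by (rule Sk_comb[OF Dc Ac a0 b0 k])
  have SD: "S_k k ?D \<le> real k * real (max_degree n E)"
    by (rule Sk_upper[OF D k(2)]) (rule Dg_upper)
  have SDc: "S_k k ?Dc \<le> real k * (real n - 1 - real (min_degree n E))"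
    by (rule Sk_upper[OF Dc k(2)]) (rule DgC_upper[OF sg])
  have SA: "S_k k ?Ad + S_k k ?Ac \<le> real k * (2 * real n - real k - 1)"
    by (rule adj_pair_bound[OF sg k])
  have "S_k k ?M + S_k k ?N \<le> \<alpha> * (S_k k ?D + S_k k ?Dc) + (1 - \<alpha>) * (S_k k ?Ad + S_k k ?Ac)"
    using SM SN by (simp add: algebra_simps)
  also have "\<dots> \<le> \<alpha> * (real k * real (max_degree n E) + real k * (real n - 1 - real (min_degree n E)))
      + (1 - \<alpha>) * (real k * (2 * real n - real k - 1))"
    by (intro add_mono mult_left_mono SD SDc SA a0 b0)
  also have "\<dots> = real k * ((2 - \<alpha>) * real n
                + \<alpha> * (real (max_degree n E) - real (min_degree n E) - 1)
                - (1 - \<alpha>) * (real k + 1))"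
    by (simp add: algebra_simps)
  finally show ?thesis using low by blast
qed

end
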